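(* Every von Neumann regular commutative ring $\mathbf A$ is an amalgamation base for $\mathsf{RCR}$: for all $\mathbf B,\mathbf C\in\mathsf{RCR}$ and ring embeddings $h_1:\mathbf A\to\mathbf B$, $h_2:\mathbf A\to\mathbf C$, there exist $\mathbf D\in\mathsf{RCR}$ and ring embeddings $g_1:\mathbf B\to\mathbf D$, $g_2:\mathbf C\to\mathbf D$ with $g_1\circ h_1=g_2\circ h_2$.
   Context: Rings are unital. $\mathsf{RCR}$ is the class of reduced commutative rings (no nonzero nilpotents). A commutative ring $\mathbf A$ is (von Neumann) regular if for every $a\in A$ there is $b\in A$ with $a=a^2b$. *)

theory Defs
  imports "HOL-Algebra.Ring" "HOL-Algebra.RingHom"
begin

definition reduced_cring :: "('a, 'm) ring_scheme \<Rightarrow> bool" where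
  "reduced_cring R \<longleftrightarrow> cring R \<and>
     (\<forall>x \<in> carrier R. \<forall>n::nat. x [^]\<^bsub>R\<^esub> n = \<zero>\<^bsub>R\<^esub> \<longrightarrow> x = \<zero>\<^bsub>R\<^esub>)"

definition vn_regular_cring :: "('a, 'm) ring_scheme \<Rightarrow> bool" where
  "vn_regular_cring R \<longleftrightarrow> cring R \<and>
     (\<forall>a \<in> carrier R. \<exists>b \<in> carrier R. a = (a \<otimes>\<^bsub>R\<^esub> a) \<otimes>\<^bsub>R\<^esub> b)"

definition ring_embedding :: "('a, 'm) ring_scheme \<Rightarrow> ('b, 'n) ring_scheme \<Rightarrow> ('a \<Rightarrow> 'b) \<Rightarrow> bool" where
  "ring_embedding R S h \<longleftrightarrow> h \<in> ring_hom R S \<and> inj_on h (carrier R)"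

end

theory Submission
  imports Defs "HOL-Algebra.QuotRing" "HOL-Algebra.Weak_Morphisms"
begin
primrec ev :: "('g, 'm) ring_scheme \<Rightarrow> ('p \<Rightarrow> 'g) \<Rightarrow> 'p list \<Rightarrow> 'g" where
  "ev G F [] = \<zero>\<^bsub>G\<^esub>"
| "ev G F (p # L) = F p \<oplus>\<^bsub>G\<^esub> ev G F L"

context abelian_group
begin

lemma ev_closed: "(\<And>p. p \<in> set L \<Longrightarrow> F p \<in> carrier G) \<Longrightarrow> ev G F L \<in> carrier G"
  by (induction L) auto

lemma ev_append: "(\<And>p. p \<in> set L \<Longrightarrow> F p \<in> carrier G) \<Longrightarrow> (\<And>p. p \<in> set M \<Longrightarrow> F p \<in> carrier G)
   \<Longrightarrow> ev G F (L @ M) = ev G F L \<oplus> ev G F M"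
  by (induction L) (auto simp: ev_closed a_assoc)

lemma ev_cong: "(\<And>p. p \<in> set L \<Longrightarrow> F p = F' p) \<Longrightarrow> ev G F L = ev G F' L"
  by (induction L) auto

lemma ev_map: "ev G F (map g L) = ev G (F \<circ> g) L"
  by (induction L) auto

lemma ev_zero: "ev G (\<lambda>p. \<zero>) L = \<zero>"
  by (induction L) auto

lemma ev_add: "(\<And>p. p \<in> set L \<Longrightarrow> F p \<in> carrier G) \<Longrightarrow> (\<And>p. p \<in> set L \<Longrightarrow> F' p \<in> carrier G)
   \<Longrightarrow> ev G (\<lambda>p. F p \<oplus> F' p) L = ev G F L \<oplus> ev G F' L"
proof (induction L)
  case Nil then show ?case by simp
next
  case (Cons a L)
  have c: "F a \<in> carrier G" "F' a \<in> carrier G" "ev G F L \<in> carrier G" "ev G F' L \<in> carrier G"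
    using Cons.prems by (auto intro!: ev_closed)
  show ?case using Cons c by (simp add: a_ac)
qed

lemma ev_concat: "(\<And>l p. l \<in> set Ls \<Longrightarrow> p \<in> set l \<Longrightarrow> F p \<in> carrier G)
   \<Longrightarrow> ev G F (concat Ls) = ev G (ev G F) Ls"
proof (induction Ls)
  case (Cons a Ls)
  have "ev G F (a @ concat Ls) = ev G F a \<oplus> ev G F (concat Ls)"
    by (rule ev_append) (use Cons.prems in auto)
  moreover have "ev G F (concat Ls) = ev G (ev G F) Ls" by (rule Cons.IH) (use Cons.prems in auto)
  ultimately show ?case by simp
qed simp

lemma ev_swap: "(\<And>p q. p \<in> set L \<Longrightarrow> q \<in> set M \<Longrightarrow> F p q \<in> carrier G)
   \<Longrightarrow> ev G (\<lambda>p. ev G (F p) M) L = ev G (\<lambda>q. ev G (\<lambda>p. F p q) L) M"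
proof (induction L)
  case Nil then show ?case by (simp add: ev_zero)
next
  case (Cons a L)
  have "ev G (\<lambda>q. ev G (\<lambda>p. F p q) (a # L)) M = ev G (\<lambda>q. F a q \<oplus> ev G (\<lambda>p. F p q) L) M"
    by simp
  also have "\<dots> = ev G (F a) M \<oplus> ev G (\<lambda>q. ev G (\<lambda>p. F p q) L) M"
    using Cons.prems by (intro ev_add) (auto intro!: ev_closed)
  finally show ?case using Cons by simp
qed

end

definition nilrad :: "('a, 'm) ring_scheme \<Rightarrow> 'a set" where
  "nilrad R = {x \<in> carrier R. \<exists>n::nat. x [^]\<^bsub>R\<^esub> n = \<zero>\<^bsub>R\<^esub>}"

context cring
begin

lemma pow_zero_ge: "x \<in> carrier R \<Longrightarrow> x [^] (n::nat) = \<zero> \<Longrightarrow> n \<le> a \<Longrightarrow> x [^] a = \<zero>"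
proof -
  assume x: "x \<in> carrier R" and n: "x [^] n = \<zero>" and le: "n \<le> a"
  have "x [^] a = x [^] n \<otimes> x [^] (a - n)" using le x by (simp add: nat_pow_mult)
  then show ?thesis using n x by simp
qed

lemma nil_sum_aux:
  assumes x: "x \<in> carrier R" and y: "y \<in> carrier R" and xn: "x [^] (n::nat) = \<zero>" and ym: "y [^] (m::nat) = \<zero>"
  shows "\<forall>a b::nat. n + m \<le> a + b + k \<longrightarrow> (x \<oplus> y) [^] k \<otimes> x [^] a \<otimes> y [^] b = \<zero>"
proof (induction k)
  case 0
  show ?case
  proof (intro allI impI)
    fix a b assume "n + m \<le> a + b + 0"
    then have "n \<le> a \<or> m \<le> b" by arith
    then show "(x \<oplus> y) [^] (0::nat) \<otimes> x [^] a \<otimes> y [^] b = \<zero>"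
      using pow_zero_ge[OF x xn] pow_zero_ge[OF y ym] x y by auto
  qed
next
  case (Suc k)
  show ?case
  proof (intro allI impI)
    fix a b assume le: "n + m \<le> a + b + Suc k"
    define P where "P = (x \<oplus> y) [^] k"
    have P: "P \<in> carrier R" using x y by (simp add: P_def)
    have xa: "x [^] a \<in> carrier R" and yb: "y [^] b \<in> carrier R" using x y by auto
    have e1: "(x \<oplus> y) [^] Suc k = P \<otimes> (x \<oplus> y)" by (simp add: P_def)
    have e2: "x [^] Suc a = x [^] a \<otimes> x" "y [^] Suc b = y [^] b \<otimes> y" by simp_all
    have "(x \<oplus> y) [^] Suc k \<otimes> x [^] a \<otimes> y [^] b
       = P \<otimes> (x [^] a \<otimes> x) \<otimes> y [^] b \<oplus> P \<otimes> x [^] a \<otimes> (y [^] b \<otimes> y)"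
      unfolding e1 using P xa yb x y by algebra
    also have "\<dots> = \<zero>"
    proof -
      have "P \<otimes> x [^] Suc a \<otimes> y [^] b = \<zero>" using Suc.IH[rule_format, of "Suc a" b] le unfolding P_def by simp
      moreover have "P \<otimes> x [^] a \<otimes> y [^] Suc b = \<zero>" using Suc.IH[rule_format, of a "Suc b"] le unfolding P_def by simp
      ultimately show ?thesis using e2 by simp
    qed
    finally show "(x \<oplus> y) [^] Suc k \<otimes> x [^] a \<otimes> y [^] b = \<zero>" .
  qed
qed

lemma nil_sum:
  assumes x: "x \<in> carrier R" and y: "y \<in> carrier R" and xn: "x [^] (n::nat) = \<zero>" and ym: "y [^] (m::nat) = \<zero>"
  shows "(x \<oplus> y) [^] (n + m) = \<zero>"
proof -
  have "(x \<oplus> y) [^] (n + m) \<otimes> x [^] (0::nat) \<otimes> y [^] (0::nat) = \<zero>"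
    using nil_sum_aux[OF assms, of "n + m", rule_format, of 0 0] by simp
  then show ?thesis using x y by simp
qed

lemma nil_mult:
  assumes x: "x \<in> carrier R" and r: "r \<in> carrier R" and xn: "x [^] (n::nat) = \<zero>"
  shows "(r \<otimes> x) [^] n = \<zero>"
  using assms by (simp add: nat_pow_distrib)

lemma nil_neg_closed: "a \<in> nilrad R \<Longrightarrow> \<ominus> a \<in> nilrad R"
proof -
  assume "a \<in> nilrad R"
  then obtain n::nat where a: "a \<in> carrier R" "a [^] n = \<zero>" by (auto simp: nilrad_def)
  have "(\<ominus> \<one> \<otimes> a) [^] n = \<zero>" using nil_mult[OF a(1) _ a(2)] by simp
  then show "\<ominus> a \<in> nilrad R" using a by (auto simp: nilrad_def l_minus)
qed

lemma nil_add_closed: "a \<in> nilrad R \<Longrightarrow> b \<in> nilrad R \<Longrightarrow> a \<oplus> b \<in> nilrad R"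
proof -
  assume "a \<in> nilrad R" "b \<in> nilrad R"
  then obtain n m :: nat where a: "a \<in> carrier R" "a [^] n = \<zero>" and b: "b \<in> carrier R" "b [^] m = \<zero>" by (auto simp: nilrad_def)
  show "a \<oplus> b \<in> nilrad R" using nil_sum[OF a(1) b(1) a(2) b(2)] a b by (auto simp: nilrad_def)
qed

lemma nil_mult_closed: "a \<in> nilrad R \<Longrightarrow> x \<in> carrier R \<Longrightarrow> x \<otimes> a \<in> nilrad R"
proof -
  assume "a \<in> nilrad R" "x \<in> carrier R"
  then obtain n::nat where a: "a \<in> carrier R" "a [^] n = \<zero>" by (auto simp: nilrad_def)
  show "x \<otimes> a \<in> nilrad R" using nil_mult[OF a(1) \<open>x \<in> carrier R\<close> a(2)] a \<open>x \<in> carrier R\<close> by (auto simp: nilrad_def)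
qed

lemma nil_nonempty: "nilrad R \<noteq> {}"
proof -
  have "\<zero> [^] (1::nat) = \<zero>" by simp
  then have "\<zero> \<in> nilrad R" unfolding nilrad_def by blast
  then show ?thesis by blast
qed

lemma nilrad_ideal: "ideal (nilrad R) R"
  apply (rule idealI)
     apply (rule ring_axioms)
    apply (rule add.subgroupI)
       apply (force simp: nilrad_def)
      apply (rule nil_nonempty)
     apply (simp add: nil_neg_closed)
    apply (simp add: nil_add_closed)
   apply (simp add: nil_mult_closed)
  apply (subst m_comm) apply (auto simp: nilrad_def)[2] apply (simp add: nil_mult_closed)
  done

lemma nilrad_quot_reduced: "reduced_cring (R Quot nilrad R)"
proof -
  interpret I: ideal "nilrad R" R by (rule nilrad_ideal)
  have cr: "cring (R Quot nilrad R)" by (rule I.quotient_is_cring) (rule is_cring)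
  interpret Q: cring "R Quot nilrad R" by (rule cr)
  interpret h: ring_hom_ring R "R Quot nilrad R" "(+>) (nilrad R)" by (rule I.rcos_ring_hom_ring)
  show ?thesis unfolding reduced_cring_def
  proof (intro conjI cr ballI allI impI)
    fix X n assume X: "X \<in> carrier (R Quot nilrad R)" and Xn: "X [^]\<^bsub>R Quot nilrad R\<^esub> (n::nat) = \<zero>\<^bsub>R Quot nilrad R\<^esub>"
    then obtain x where x: "x \<in> carrier R" "X = nilrad R +> x"
      unfolding FactRing_def using A_RCOSETS_def'[of R "nilrad R"] by auto
    have "nilrad R +> (x [^] n) = (nilrad R +> x) [^]\<^bsub>R Quot nilrad R\<^esub> n"
      by (rule h.hom_nat_pow) (rule x(1))
    then have "nilrad R +> (x [^] n) = \<zero>\<^bsub>R Quot nilrad R\<^esub>" using Xn x(2) by simp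
    moreover have z: "\<zero>\<^bsub>R Quot nilrad R\<^esub> = nilrad R" unfolding FactRing_def by simp
    ultimately have "nilrad R +> (x [^] n) = nilrad R" by simp
    then have "x [^] n \<in> nilrad R"
      using I.a_rcos_self[of "x [^] n"] x by simp
    then obtain k::nat where k: "(x [^] n) [^] k = \<zero>" unfolding nilrad_def by blast
    have "x [^] (n * k) = (x [^] n) [^] k" by (rule nat_pow_pow[symmetric]) (rule x(1))
    then have "x [^] (n * k) = \<zero>" using k by simp
    then have "x \<in> nilrad R" using x(1) unfolding nilrad_def by blast
    then show "X = \<zero>\<^bsub>R Quot nilrad R\<^esub>" using x I.a_rcos_const z by simp
  qed
qed

end

definition test :: "('a, 'm1) ring_scheme \<Rightarrow> ('b, 'm2) ring_scheme \<Rightarrow> ('c, 'm3) ring_scheme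
   \<Rightarrow> ('a \<Rightarrow> 'b) \<Rightarrow> ('a \<Rightarrow> 'c) \<Rightarrow> 'g ring \<Rightarrow> ('b \<Rightarrow> 'c \<Rightarrow> 'g) \<Rightarrow> bool" where
  "test A B C h1 h2 G \<Phi> \<longleftrightarrow> abelian_group G \<and>
     (\<forall>x\<in>carrier B. \<forall>y\<in>carrier C. \<Phi> x y \<in> carrier G) \<and>
     (\<forall>x1\<in>carrier B. \<forall>x2\<in>carrier B. \<forall>y\<in>carrier C. \<Phi> (x1 \<oplus>\<^bsub>B\<^esub> x2) y = \<Phi> x1 y \<oplus>\<^bsub>G\<^esub> \<Phi> x2 y) \<and>
     (\<forall>x\<in>carrier B. \<forall>y1\<in>carrier C. \<forall>y2\<in>carrier C. \<Phi> x (y1 \<oplus>\<^bsub>C\<^esub> y2) = \<Phi> x y1 \<oplus>\<^bsub>G\<^esub> \<Phi> x y2) \<and>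
     (\<forall>a\<in>carrier A. \<forall>x\<in>carrier B. \<forall>y\<in>carrier C. \<Phi> (h1 a \<otimes>\<^bsub>B\<^esub> x) y = \<Phi> x (h2 a \<otimes>\<^bsub>C\<^esub> y))"

locale key_setup =
  fixes A :: "'a ring" and B :: "'b ring" and C :: "'c ring" and h1 h2 and b
  assumes cA: "cring A" and cB: "cring B" and cC: "cring C"
    and h1: "h1 \<in> ring_hom A B" and h2: "h2 \<in> ring_hom A C" and inj2: "inj_on h2 (carrier A)"
    and reg: "\<forall>a\<in>carrier A. \<exists>x\<in>carrier A. a = (a \<otimes>\<^bsub>A\<^esub> a) \<otimes>\<^bsub>A\<^esub> x"
    and b: "b \<in> carrier B" and bnz: "b \<noteq> \<zero>\<^bsub>B\<^esub>"

sublocale key_setup \<subseteq> RA: cring A by (rule cA)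
sublocale key_setup \<subseteq> RB: cring B by (rule cB)
sublocale key_setup \<subseteq> RC: cring C by (rule cC)
sublocale key_setup \<subseteq> H1: ring_hom_cring A B h1
  by (simp add: ring_hom_cring_def ring_hom_cring_axioms_def cA cB h1)
sublocale key_setup \<subseteq> H2: ring_hom_cring A C h2
  by (simp add: ring_hom_cring_def ring_hom_cring_axioms_def cA cC h2)

context key_setup
begin

lemma h1_minus: "x \<in> carrier A \<Longrightarrow> y \<in> carrier A \<Longrightarrow> h1 (x \<ominus>\<^bsub>A\<^esub> y) = h1 x \<ominus>\<^bsub>B\<^esub> h1 y"
  by (simp add: RA.minus_eq RB.minus_eq)
lemma h2_minus: "x \<in> carrier A \<Longrightarrow> y \<in> carrier A \<Longrightarrow> h2 (x \<ominus>\<^bsub>A\<^esub> y) = h2 x \<ominus>\<^bsub>C\<^esub> h2 y"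
  by (simp add: RA.minus_eq RC.minus_eq)

definition sub :: "'c set \<Rightarrow> bool" where
  "sub W \<longleftrightarrow> W \<subseteq> carrier C \<and> \<zero>\<^bsub>C\<^esub> \<in> W \<and> (\<forall>x\<in>W. \<forall>y\<in>W. x \<oplus>\<^bsub>C\<^esub> y \<in> W)
     \<and> (\<forall>a\<in>carrier A. \<forall>x\<in>W. h2 a \<otimes>\<^bsub>C\<^esub> x \<in> W)"

definition cnd :: "'c set \<Rightarrow> bool" where
  "cnd W \<longleftrightarrow> (\<forall>a\<in>carrier A. h2 a \<in> W \<longrightarrow> h1 a \<otimes>\<^bsub>B\<^esub> b \<noteq> b)"

lemma sub_neg: "sub W \<Longrightarrow> x \<in> W \<Longrightarrow> \<ominus>\<^bsub>C\<^esub> x \<in> W"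
proof -
  assume s: "sub W" and x: "x \<in> W"
  then have xc: "x \<in> carrier C" by (auto simp: sub_def)
  have m: "\<forall>a\<in>carrier A. \<forall>x\<in>W. h2 a \<otimes>\<^bsub>C\<^esub> x \<in> W" using s by (simp add: sub_def)
  have "h2 (\<ominus>\<^bsub>A\<^esub> \<one>\<^bsub>A\<^esub>) \<otimes>\<^bsub>C\<^esub> x \<in> W" using m x RA.a_inv_closed RA.one_closed by blast
  moreover have "h2 (\<ominus>\<^bsub>A\<^esub> \<one>\<^bsub>A\<^esub>) \<otimes>\<^bsub>C\<^esub> x = \<ominus>\<^bsub>C\<^esub> x" using xc
    by (simp add: RC.l_minus)
  ultimately show ?thesis by simp
qed

lemma sub_minus: "sub W \<Longrightarrow> x \<in> W \<Longrightarrow> y \<in> W \<Longrightarrow> x \<ominus>\<^bsub>C\<^esub> y \<in> W"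
  using sub_neg[of W y] by (auto simp: sub_def RC.minus_eq)

lemma sub_add: "sub W \<Longrightarrow> x \<in> W \<Longrightarrow> y \<in> W \<Longrightarrow> x \<oplus>\<^bsub>C\<^esub> y \<in> W"
  by (auto simp: sub_def)

lemma sub_smult: "sub W \<Longrightarrow> a \<in> carrier A \<Longrightarrow> x \<in> W \<Longrightarrow> h2 a \<otimes>\<^bsub>C\<^esub> x \<in> W"
  by (auto simp: sub_def)

lemma sub_carrier: "sub W \<Longrightarrow> x \<in> W \<Longrightarrow> x \<in> carrier C"
  by (auto simp: sub_def)

lemma sub_zero: "sub W \<Longrightarrow> \<zero>\<^bsub>C\<^esub> \<in> W"
  by (auto simp: sub_def)

lemma zorn_W: "\<exists>W. sub W \<and> cnd W \<and> (\<forall>W'. sub W' \<and> cnd W' \<and> W \<subseteq> W' \<longrightarrow> W' = W)"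
proof -
  define S where "S = {W. sub W \<and> cnd W}"
  have "{\<zero>\<^bsub>C\<^esub>} \<in> S"
  proof -
    have "sub {\<zero>\<^bsub>C\<^esub>}" by (auto simp: sub_def)
    moreover have "cnd {\<zero>\<^bsub>C\<^esub>}"
      unfolding cnd_def
    proof (intro ballI impI)
      fix a assume a: "a \<in> carrier A" and "h2 a \<in> {\<zero>\<^bsub>C\<^esub>}"
      then have "h2 a = h2 \<zero>\<^bsub>A\<^esub>" by simp
      from inj_onD[OF inj2 this a RA.zero_closed] have "a = \<zero>\<^bsub>A\<^esub>" .
      then show "h1 a \<otimes>\<^bsub>B\<^esub> b \<noteq> b" using b bnz by simp
    qed
    ultimately show ?thesis by (simp add: S_def)
  qed
  then have ne: "S \<noteq> {}" by blast
  have "\<exists>M\<in>S. \<forall>X\<in>S. M \<subseteq> X \<longrightarrow> X = M"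
  proof (rule subset_Zorn_nonempty[OF ne])
    fix Ch assume Cne: "Ch \<noteq> {}" and ch: "subset.chain S Ch"
    then have CS: "Ch \<subseteq> S" and comp: "\<And>X Y. X \<in> Ch \<Longrightarrow> Y \<in> Ch \<Longrightarrow> X \<subseteq> Y \<or> Y \<subseteq> X"
      unfolding pred_on.chain_def by auto
    have sCh: "\<And>X. X \<in> Ch \<Longrightarrow> sub X" and cCh: "\<And>X. X \<in> Ch \<Longrightarrow> cnd X" using CS by (auto simp: S_def)
    have "sub (\<Union>Ch)"
      unfolding sub_def
    proof (intro conjI ballI)
      show "\<Union>Ch \<subseteq> carrier C" using sCh sub_carrier by blast
      obtain X where "X \<in> Ch" using Cne by blast
      then show "\<zero>\<^bsub>C\<^esub> \<in> \<Union>Ch" using sCh[of X] by (auto simp: sub_def)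
    next
      fix x y assume "x \<in> \<Union>Ch" "y \<in> \<Union>Ch"
      then obtain X Y where X: "X \<in> Ch" "x \<in> X" and Y: "Y \<in> Ch" "y \<in> Y" by blast
      show "x \<oplus>\<^bsub>C\<^esub> y \<in> \<Union>Ch"
      proof (cases "X \<subseteq> Y")
        case True then show ?thesis using sub_add[OF sCh[OF Y(1)], of x y] X Y by blast
      next
        case False then have "Y \<subseteq> X" using comp[OF X(1) Y(1)] by blast
        then show ?thesis using sub_add[OF sCh[OF X(1)], of x y] X Y by blast
      qed
    next
      fix a x assume "a \<in> carrier A" "x \<in> \<Union>Ch"
      then show "h2 a \<otimes>\<^bsub>C\<^esub> x \<in> \<Union>Ch" using sCh sub_smult by blast
    qed
    moreover have "cnd (\<Union>Ch)" using cCh unfolding cnd_def by blast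
    ultimately show "\<Union>Ch \<in> S" by (simp add: S_def)
  qed
  then show ?thesis unfolding S_def by blast
qed

end

locale key_max = key_setup +
  fixes W
  assumes subW: "sub W" and cndW: "cnd W" and maxW: "\<And>W'. sub W' \<Longrightarrow> cnd W' \<Longrightarrow> W \<subseteq> W' \<Longrightarrow> W' = W"
begin

lemma W_carrier: "x \<in> W \<Longrightarrow> x \<in> carrier C" using sub_carrier[OF subW] .

lemma ext_idem:
  assumes e: "e \<in> carrier A"
  shows "(\<forall>c\<in>carrier C. h2 e \<otimes>\<^bsub>C\<^esub> c \<in> W) \<or>
    (\<exists>a\<in>carrier A. \<exists>w\<in>W. \<exists>c\<in>carrier C. h2 a = w \<oplus>\<^bsub>C\<^esub> h2 e \<otimes>\<^bsub>C\<^esub> c \<and> h1 a \<otimes>\<^bsub>B\<^esub> b = b)"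
proof -
  define E where "E = {w \<oplus>\<^bsub>C\<^esub> h2 e \<otimes>\<^bsub>C\<^esub> c | w c. w \<in> W \<and> c \<in> carrier C}"
  have he: "h2 e \<in> carrier C" using e by simp
  have sE: "sub E"
    unfolding sub_def
  proof (intro conjI ballI)
    show "E \<subseteq> carrier C" using he W_carrier by (auto simp: E_def)
    have "\<zero>\<^bsub>C\<^esub> = \<zero>\<^bsub>C\<^esub> \<oplus>\<^bsub>C\<^esub> h2 e \<otimes>\<^bsub>C\<^esub> \<zero>\<^bsub>C\<^esub>" using he by simp
    then show "\<zero>\<^bsub>C\<^esub> \<in> E" unfolding E_def using sub_zero[OF subW] by blast
  next
    fix x y assume "x \<in> E" "y \<in> E"
    then obtain w1 c1 w2 c2 where x: "x = w1 \<oplus>\<^bsub>C\<^esub> h2 e \<otimes>\<^bsub>C\<^esub> c1" "w1 \<in> W" "c1 \<in> carrier C"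
      and y: "y = w2 \<oplus>\<^bsub>C\<^esub> h2 e \<otimes>\<^bsub>C\<^esub> c2" "w2 \<in> W" "c2 \<in> carrier C" unfolding E_def by blast
    have "x \<oplus>\<^bsub>C\<^esub> y = (w1 \<oplus>\<^bsub>C\<^esub> w2) \<oplus>\<^bsub>C\<^esub> h2 e \<otimes>\<^bsub>C\<^esub> (c1 \<oplus>\<^bsub>C\<^esub> c2)"
      using x y he W_carrier[OF x(2)] W_carrier[OF y(2)] by algebra
    moreover have "w1 \<oplus>\<^bsub>C\<^esub> w2 \<in> W" using sub_add[OF subW x(2) y(2)] .
    ultimately show "x \<oplus>\<^bsub>C\<^esub> y \<in> E" unfolding E_def using x(3) y(3) by blast
  next
    fix a x assume a: "a \<in> carrier A" and "x \<in> E"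
    then obtain w1 c1 where x: "x = w1 \<oplus>\<^bsub>C\<^esub> h2 e \<otimes>\<^bsub>C\<^esub> c1" "w1 \<in> W" "c1 \<in> carrier C"
      unfolding E_def by blast
    have ha: "h2 a \<in> carrier C" using a by simp
    have "h2 a \<otimes>\<^bsub>C\<^esub> x = h2 a \<otimes>\<^bsub>C\<^esub> w1 \<oplus>\<^bsub>C\<^esub> h2 e \<otimes>\<^bsub>C\<^esub> (h2 a \<otimes>\<^bsub>C\<^esub> c1)"
      using x ha he W_carrier[OF x(2)] by algebra
    moreover have "h2 a \<otimes>\<^bsub>C\<^esub> w1 \<in> W" using sub_smult[OF subW a x(2)] .
    ultimately show "h2 a \<otimes>\<^bsub>C\<^esub> x \<in> E" unfolding E_def using x(3) ha by blast
  qed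
  have WE: "W \<subseteq> E"
  proof
    fix w assume w: "w \<in> W"
    then have "w = w \<oplus>\<^bsub>C\<^esub> h2 e \<otimes>\<^bsub>C\<^esub> \<zero>\<^bsub>C\<^esub>" using he W_carrier by simp
    then show "w \<in> E" unfolding E_def using w by blast
  qed
  show ?thesis
  proof (cases "cnd E")
    case True
    then have EW: "E = W" using maxW[OF sE _ WE] by simp
    have "\<forall>c\<in>carrier C. h2 e \<otimes>\<^bsub>C\<^esub> c \<in> W"
    proof
      fix c assume c: "c \<in> carrier C"
      have "h2 e \<otimes>\<^bsub>C\<^esub> c = \<zero>\<^bsub>C\<^esub> \<oplus>\<^bsub>C\<^esub> h2 e \<otimes>\<^bsub>C\<^esub> c" using c he by simp
      then have "h2 e \<otimes>\<^bsub>C\<^esub> c \<in> E" unfolding E_def using c sub_zero[OF subW] by blast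
      then show "h2 e \<otimes>\<^bsub>C\<^esub> c \<in> W" using EW by simp
    qed
    then show ?thesis by blast
  next
    case False
    then obtain a where a: "a \<in> carrier A" "h2 a \<in> E" "h1 a \<otimes>\<^bsub>B\<^esub> b = b" unfolding cnd_def by blast
    then show ?thesis unfolding E_def by blast
  qed
qed

end

context key_max
begin

lemma idem_split:
  assumes e: "e \<in> carrier A" and ee: "e \<otimes>\<^bsub>A\<^esub> e = e"
  shows "(\<forall>c\<in>carrier C. h2 e \<otimes>\<^bsub>C\<^esub> c \<in> W) \<or> (\<forall>c\<in>carrier C. h2 (\<one>\<^bsub>A\<^esub> \<ominus>\<^bsub>A\<^esub> e) \<otimes>\<^bsub>C\<^esub> c \<in> W)"
proof (rule ccontr)
  assume neg: "\<not> ?thesis"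
  have e': "\<one>\<^bsub>A\<^esub> \<ominus>\<^bsub>A\<^esub> e \<in> carrier A" using e by simp
  obtain a w c where a: "a \<in> carrier A" "w \<in> W" "c \<in> carrier C" "h2 a = w \<oplus>\<^bsub>C\<^esub> h2 e \<otimes>\<^bsub>C\<^esub> c"
      "h1 a \<otimes>\<^bsub>B\<^esub> b = b"
    using ext_idem[OF e] neg by blast
  obtain a' w' c' where a': "a' \<in> carrier A" "w' \<in> W" "c' \<in> carrier C"
      "h2 a' = w' \<oplus>\<^bsub>C\<^esub> h2 (\<one>\<^bsub>A\<^esub> \<ominus>\<^bsub>A\<^esub> e) \<otimes>\<^bsub>C\<^esub> c'" "h1 a' \<otimes>\<^bsub>B\<^esub> b = b"
    using ext_idem[OF e'] neg by blast
  define E where "E = h2 e"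
  have Ec: "E \<in> carrier C" using e by (simp add: E_def)
  have EE: "E \<otimes>\<^bsub>C\<^esub> E = E" unfolding E_def using e ee H2.hom_mult[of e e, symmetric] by simp
  have h2e': "h2 (\<one>\<^bsub>A\<^esub> \<ominus>\<^bsub>A\<^esub> e) = \<one>\<^bsub>C\<^esub> \<ominus>\<^bsub>C\<^esub> E" using e by (simp add: h2_minus E_def)
  define as where "as = (\<one>\<^bsub>A\<^esub> \<ominus>\<^bsub>A\<^esub> e) \<otimes>\<^bsub>A\<^esub> a \<oplus>\<^bsub>A\<^esub> e \<otimes>\<^bsub>A\<^esub> a'"
  have as: "as \<in> carrier A" using e a a' by (simp add: as_def)
  have wc: "w \<in> carrier C" "w' \<in> carrier C" using a(2) a'(2) W_carrier by auto
  have "h2 as = h2 (\<one>\<^bsub>A\<^esub> \<ominus>\<^bsub>A\<^esub> e) \<otimes>\<^bsub>C\<^esub> h2 a \<oplus>\<^bsub>C\<^esub> h2 e \<otimes>\<^bsub>C\<^esub> h2 a'"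
    using e a a' e' by (simp add: as_def)
  also have "\<dots> = (\<one>\<^bsub>C\<^esub> \<ominus>\<^bsub>C\<^esub> E) \<otimes>\<^bsub>C\<^esub> w \<oplus>\<^bsub>C\<^esub> E \<otimes>\<^bsub>C\<^esub> w'
      \<oplus>\<^bsub>C\<^esub> (E \<ominus>\<^bsub>C\<^esub> E \<otimes>\<^bsub>C\<^esub> E) \<otimes>\<^bsub>C\<^esub> (c \<oplus>\<^bsub>C\<^esub> c')"
    unfolding a(4) a'(4) h2e' E_def[symmetric] using Ec wc a(3) a'(3) by algebra
  also have "\<dots> = (\<one>\<^bsub>C\<^esub> \<ominus>\<^bsub>C\<^esub> E) \<otimes>\<^bsub>C\<^esub> w \<oplus>\<^bsub>C\<^esub> E \<otimes>\<^bsub>C\<^esub> w'"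
    unfolding EE using Ec wc a(3) a'(3) by algebra
  finally have "h2 as \<in> W"
    using sub_add[OF subW sub_smult[OF subW e' a(2)] sub_smult[OF subW e a'(2)]]
    by (simp add: h2e' E_def)
  moreover have "h1 as \<otimes>\<^bsub>B\<^esub> b = b"
  proof -
    define F where "F = h1 e"
    have Fc: "F \<in> carrier B" using e by (simp add: F_def)
    have h1as: "h1 as = (\<one>\<^bsub>B\<^esub> \<ominus>\<^bsub>B\<^esub> F) \<otimes>\<^bsub>B\<^esub> h1 a \<oplus>\<^bsub>B\<^esub> F \<otimes>\<^bsub>B\<^esub> h1 a'"
      using e a a' by (simp add: as_def h1_minus F_def)
    have "h1 as \<otimes>\<^bsub>B\<^esub> b = (\<one>\<^bsub>B\<^esub> \<ominus>\<^bsub>B\<^esub> F) \<otimes>\<^bsub>B\<^esub> (h1 a \<otimes>\<^bsub>B\<^esub> b) \<oplus>\<^bsub>B\<^esub> F \<otimes>\<^bsub>B\<^esub> (h1 a' \<otimes>\<^bsub>B\<^esub> b)"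
      unfolding h1as using b Fc H1.hom_closed[OF a(1)] H1.hom_closed[OF a'(1)] by algebra
    also have "\<dots> = b" unfolding a(5) a'(5) using Fc b by algebra
    finally show ?thesis .
  qed
  ultimately show False using cndW as unfolding cnd_def by blast
qed

lemma span:
  assumes c: "c \<in> carrier C"
  shows "\<exists>a\<in>carrier A. c \<ominus>\<^bsub>C\<^esub> h2 a \<in> W"
proof (rule ccontr)
  assume neg: "\<not> ?thesis"
  define E where "E = {w \<oplus>\<^bsub>C\<^esub> h2 a \<otimes>\<^bsub>C\<^esub> c | w a. w \<in> W \<and> a \<in> carrier A}"
  have sE: "sub E"
    unfolding sub_def
  proof (intro conjI ballI)
    show "E \<subseteq> carrier C" using c W_carrier by (auto simp: E_def)
    have "\<zero>\<^bsub>C\<^esub> = \<zero>\<^bsub>C\<^esub> \<oplus>\<^bsub>C\<^esub> h2 \<zero>\<^bsub>A\<^esub> \<otimes>\<^bsub>C\<^esub> c" using c by simp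
    then show "\<zero>\<^bsub>C\<^esub> \<in> E" unfolding E_def using sub_zero[OF subW] RA.zero_closed by blast
  next
    fix x y assume "x \<in> E" "y \<in> E"
    then obtain w1 c1 w2 c2 where x: "x = w1 \<oplus>\<^bsub>C\<^esub> h2 c1 \<otimes>\<^bsub>C\<^esub> c" "w1 \<in> W" "c1 \<in> carrier A"
      and y: "y = w2 \<oplus>\<^bsub>C\<^esub> h2 c2 \<otimes>\<^bsub>C\<^esub> c" "w2 \<in> W" "c2 \<in> carrier A" unfolding E_def by blast
    have "x \<oplus>\<^bsub>C\<^esub> y = (w1 \<oplus>\<^bsub>C\<^esub> w2) \<oplus>\<^bsub>C\<^esub> (h2 c1 \<oplus>\<^bsub>C\<^esub> h2 c2) \<otimes>\<^bsub>C\<^esub> c"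
      unfolding x(1) y(1) using c W_carrier[OF x(2)] W_carrier[OF y(2)] H2.hom_closed[OF x(3)] H2.hom_closed[OF y(3)]
      by algebra
    also have "\<dots> = (w1 \<oplus>\<^bsub>C\<^esub> w2) \<oplus>\<^bsub>C\<^esub> h2 (c1 \<oplus>\<^bsub>A\<^esub> c2) \<otimes>\<^bsub>C\<^esub> c"
      using x(3) y(3) by simp
    finally have "x \<oplus>\<^bsub>C\<^esub> y = (w1 \<oplus>\<^bsub>C\<^esub> w2) \<oplus>\<^bsub>C\<^esub> h2 (c1 \<oplus>\<^bsub>A\<^esub> c2) \<otimes>\<^bsub>C\<^esub> c" .
    moreover have "w1 \<oplus>\<^bsub>C\<^esub> w2 \<in> W" using sub_add[OF subW x(2) y(2)] .
    ultimately show "x \<oplus>\<^bsub>C\<^esub> y \<in> E" unfolding E_def using x(3) y(3) by blast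
  next
    fix a x assume a: "a \<in> carrier A" and "x \<in> E"
    then obtain w1 c1 where x: "x = w1 \<oplus>\<^bsub>C\<^esub> h2 c1 \<otimes>\<^bsub>C\<^esub> c" "w1 \<in> W" "c1 \<in> carrier A"
      unfolding E_def by blast
    have "h2 a \<otimes>\<^bsub>C\<^esub> x = h2 a \<otimes>\<^bsub>C\<^esub> w1 \<oplus>\<^bsub>C\<^esub> h2 (a \<otimes>\<^bsub>A\<^esub> c1) \<otimes>\<^bsub>C\<^esub> c"
    proof -
      have "h2 a \<otimes>\<^bsub>C\<^esub> x = h2 a \<otimes>\<^bsub>C\<^esub> w1 \<oplus>\<^bsub>C\<^esub> (h2 a \<otimes>\<^bsub>C\<^esub> h2 c1) \<otimes>\<^bsub>C\<^esub> c"
        unfolding x(1) using c W_carrier[OF x(2)] H2.hom_closed[OF x(3)] H2.hom_closed[OF a] by algebra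
      then show ?thesis using a x(3) by simp
    qed
    moreover have "h2 a \<otimes>\<^bsub>C\<^esub> w1 \<in> W" using sub_smult[OF subW a x(2)] .
    ultimately show "h2 a \<otimes>\<^bsub>C\<^esub> x \<in> E" unfolding E_def using x(3) a by blast
  qed
  have WE: "W \<subseteq> E"
  proof
    fix w assume w: "w \<in> W"
    then have "w = w \<oplus>\<^bsub>C\<^esub> h2 \<zero>\<^bsub>A\<^esub> \<otimes>\<^bsub>C\<^esub> c" using c W_carrier by simp
    then show "w \<in> E" unfolding E_def using w RA.zero_closed by blast
  qed
  show False
  proof (cases "cnd E")
    case True
    then have EW: "E = W" using maxW[OF sE _ WE] by simp
    have "c = \<zero>\<^bsub>C\<^esub> \<oplus>\<^bsub>C\<^esub> h2 \<one>\<^bsub>A\<^esub> \<otimes>\<^bsub>C\<^esub> c" using c by simp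
    then have "c \<in> E" unfolding E_def using sub_zero[OF subW] RA.one_closed by blast
    then have "c \<ominus>\<^bsub>C\<^esub> h2 \<zero>\<^bsub>A\<^esub> \<in> W" using EW c by (simp add: RC.minus_eq)
    then show False using neg RA.zero_closed by blast
  next
    case False
    then obtain a where "a \<in> carrier A" "h2 a \<in> E" and ab: "h1 a \<otimes>\<^bsub>B\<^esub> b = b" unfolding cnd_def by blast
    then obtain w a1 where a: "a \<in> carrier A" "w \<in> W" "a1 \<in> carrier A" "h2 a = w \<oplus>\<^bsub>C\<^esub> h2 a1 \<otimes>\<^bsub>C\<^esub> c"
      unfolding E_def by blast
    obtain x where x: "x \<in> carrier A" "a1 = (a1 \<otimes>\<^bsub>A\<^esub> a1) \<otimes>\<^bsub>A\<^esub> x" using reg a(3) by blast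
    define e where "e = a1 \<otimes>\<^bsub>A\<^esub> x"
    have e: "e \<in> carrier A" using x a by (simp add: e_def)
    have ee: "e \<otimes>\<^bsub>A\<^esub> e = e"
    proof -
      have "e \<otimes>\<^bsub>A\<^esub> e = ((a1 \<otimes>\<^bsub>A\<^esub> a1) \<otimes>\<^bsub>A\<^esub> x) \<otimes>\<^bsub>A\<^esub> x"
        unfolding e_def using x(1) a(3) by algebra
      also have "\<dots> = e" unfolding e_def by (simp only: x(2)[symmetric])
      finally show ?thesis .
    qed
    have a1e: "a1 \<otimes>\<^bsub>A\<^esub> e = a1" unfolding e_def using x a(3) by algebra
    have wc: "w \<in> carrier C" using a(2) W_carrier by auto
    from idem_split[OF e ee] show False
    proof
      assume H: "\<forall>c\<in>carrier C. h2 e \<otimes>\<^bsub>C\<^esub> c \<in> W"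
      have "h2 a1 \<otimes>\<^bsub>C\<^esub> c = h2 a1 \<otimes>\<^bsub>C\<^esub> (h2 e \<otimes>\<^bsub>C\<^esub> c)"
      proof -
        have "h2 a1 \<otimes>\<^bsub>C\<^esub> (h2 e \<otimes>\<^bsub>C\<^esub> c) = h2 (a1 \<otimes>\<^bsub>A\<^esub> e) \<otimes>\<^bsub>C\<^esub> c"
          using a(3) e c by (simp add: RC.m_assoc)
        then show ?thesis using a1e by simp
      qed
      also have "\<dots> \<in> W" using H c sub_smult[OF subW a(3)] by blast
      finally have "h2 a \<in> W" using a(4) sub_add[OF subW a(2)] by simp
      then show False using cndW a(1) ab unfolding cnd_def by blast
    next
      assume H: "\<forall>c\<in>carrier C. h2 (\<one>\<^bsub>A\<^esub> \<ominus>\<^bsub>A\<^esub> e) \<otimes>\<^bsub>C\<^esub> c \<in> W"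
      have xa: "x \<otimes>\<^bsub>A\<^esub> a \<in> carrier A" using x a by simp
      have "c \<ominus>\<^bsub>C\<^esub> h2 (x \<otimes>\<^bsub>A\<^esub> a) = h2 (\<one>\<^bsub>A\<^esub> \<ominus>\<^bsub>A\<^esub> e) \<otimes>\<^bsub>C\<^esub> c \<ominus>\<^bsub>C\<^esub> h2 x \<otimes>\<^bsub>C\<^esub> w"
      proof -
        have "h2 (x \<otimes>\<^bsub>A\<^esub> a) = h2 x \<otimes>\<^bsub>C\<^esub> (w \<oplus>\<^bsub>C\<^esub> h2 a1 \<otimes>\<^bsub>C\<^esub> c)" using x a by simp
        moreover have "h2 (\<one>\<^bsub>A\<^esub> \<ominus>\<^bsub>A\<^esub> e) = \<one>\<^bsub>C\<^esub> \<ominus>\<^bsub>C\<^esub> h2 a1 \<otimes>\<^bsub>C\<^esub> h2 x"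
          using e x a by (simp add: h2_minus e_def)
        moreover have "c \<ominus>\<^bsub>C\<^esub> h2 x \<otimes>\<^bsub>C\<^esub> (w \<oplus>\<^bsub>C\<^esub> h2 a1 \<otimes>\<^bsub>C\<^esub> c)
           = (\<one>\<^bsub>C\<^esub> \<ominus>\<^bsub>C\<^esub> h2 a1 \<otimes>\<^bsub>C\<^esub> h2 x) \<otimes>\<^bsub>C\<^esub> c \<ominus>\<^bsub>C\<^esub> h2 x \<otimes>\<^bsub>C\<^esub> w"
          using c wc H2.hom_closed[OF x(1)] H2.hom_closed[OF a(3)] by algebra
        ultimately show ?thesis by simp
      qed
      also have "\<dots> \<in> W" using sub_minus[OF subW] H c sub_smult[OF subW x(1) a(2)] by blast
      finally show False using neg xa by blast
    qed
  qed
qed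

definition N :: "'b set" where
  "N = {y \<in> carrier B. \<exists>a\<in>carrier A. h2 a \<in> W \<and> h1 a \<otimes>\<^bsub>B\<^esub> y = y}"

lemma N_zero: "\<zero>\<^bsub>B\<^esub> \<in> N"
  unfolding N_def using sub_zero[OF subW] RA.zero_closed by force

lemma N_neg: "y \<in> N \<Longrightarrow> \<ominus>\<^bsub>B\<^esub> y \<in> N"
proof -
  assume "y \<in> N"
  then obtain a where y: "y \<in> carrier B" "a \<in> carrier A" "h2 a \<in> W" "h1 a \<otimes>\<^bsub>B\<^esub> y = y" unfolding N_def by blast
  have "h1 a \<otimes>\<^bsub>B\<^esub> (\<ominus>\<^bsub>B\<^esub> y) = \<ominus>\<^bsub>B\<^esub> (h1 a \<otimes>\<^bsub>B\<^esub> y)" using y by (simp add: RB.r_minus)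
  then show ?thesis using y unfolding N_def by auto
qed

lemma N_lmult: "y \<in> N \<Longrightarrow> x \<in> carrier B \<Longrightarrow> x \<otimes>\<^bsub>B\<^esub> y \<in> N"
proof -
  assume "y \<in> N" and x: "x \<in> carrier B"
  then obtain a where y: "y \<in> carrier B" "a \<in> carrier A" "h2 a \<in> W" "h1 a \<otimes>\<^bsub>B\<^esub> y = y" unfolding N_def by blast
  have "h1 a \<otimes>\<^bsub>B\<^esub> (x \<otimes>\<^bsub>B\<^esub> y) = x \<otimes>\<^bsub>B\<^esub> (h1 a \<otimes>\<^bsub>B\<^esub> y)" using y x by (simp add: RB.m_lcomm)
  then show ?thesis using y x unfolding N_def by auto
qed

lemma N_add: "y1 \<in> N \<Longrightarrow> y2 \<in> N \<Longrightarrow> y1 \<oplus>\<^bsub>B\<^esub> y2 \<in> N"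
proof -
  assume "y1 \<in> N" "y2 \<in> N"
  then obtain a1 a2 where y1: "y1 \<in> carrier B" "a1 \<in> carrier A" "h2 a1 \<in> W" "h1 a1 \<otimes>\<^bsub>B\<^esub> y1 = y1"
    and y2: "y2 \<in> carrier B" "a2 \<in> carrier A" "h2 a2 \<in> W" "h1 a2 \<otimes>\<^bsub>B\<^esub> y2 = y2" unfolding N_def by blast
  define a where "a = a1 \<oplus>\<^bsub>A\<^esub> a2 \<ominus>\<^bsub>A\<^esub> a1 \<otimes>\<^bsub>A\<^esub> a2"
  have ac: "a \<in> carrier A" using y1 y2 by (simp add: a_def)
  have "h2 a = h2 a1 \<oplus>\<^bsub>C\<^esub> h2 a2 \<ominus>\<^bsub>C\<^esub> h2 a1 \<otimes>\<^bsub>C\<^esub> h2 a2" using y1 y2 by (simp add: a_def h2_minus)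
  also have "\<dots> \<in> W" using sub_minus[OF subW sub_add[OF subW y1(3) y2(3)] sub_smult[OF subW y1(2) y2(3)]] .
  finally have h2a: "h2 a \<in> W" .
  have P: "h1 a1 \<in> carrier B" "h1 a2 \<in> carrier B" using y1 y2 by auto
  have "h1 a \<otimes>\<^bsub>B\<^esub> (y1 \<oplus>\<^bsub>B\<^esub> y2) = (h1 a1 \<oplus>\<^bsub>B\<^esub> h1 a2 \<ominus>\<^bsub>B\<^esub> h1 a1 \<otimes>\<^bsub>B\<^esub> h1 a2) \<otimes>\<^bsub>B\<^esub> (y1 \<oplus>\<^bsub>B\<^esub> y2)"
    using y1 y2 by (simp add: a_def h1_minus)
  also have "\<dots> = h1 a1 \<otimes>\<^bsub>B\<^esub> y1 \<oplus>\<^bsub>B\<^esub> h1 a2 \<otimes>\<^bsub>B\<^esub> y2 \<oplus>\<^bsub>B\<^esub> h1 a2 \<otimes>\<^bsub>B\<^esub> (y1 \<ominus>\<^bsub>B\<^esub> h1 a1 \<otimes>\<^bsub>B\<^esub> y1)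
     \<oplus>\<^bsub>B\<^esub> h1 a1 \<otimes>\<^bsub>B\<^esub> (y2 \<ominus>\<^bsub>B\<^esub> h1 a2 \<otimes>\<^bsub>B\<^esub> y2)"
    using P y1(1) y2(1) by algebra
  also have "\<dots> = y1 \<oplus>\<^bsub>B\<^esub> y2" unfolding y1(4) y2(4) using P y1(1) y2(1) by algebra
  finally show ?thesis using h2a ac y1 y2 unfolding N_def by auto
qed

lemma N_ideal: "ideal N B"
  apply (rule idealI)
     apply (rule RB.ring_axioms)
    apply (rule RB.add.subgroupI)
       apply (force simp: N_def)
      apply (use N_zero in blast)
     apply (simp add: N_neg)
    apply (simp add: N_add)
   apply (simp add: N_lmult)
  apply (subst RB.m_comm) apply (auto simp: N_def)[2] apply (simp add: N_lmult)
  done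

lemma b_notin_N: "b \<notin> N"
  using cndW unfolding N_def cnd_def by blast

end

context key_max
begin

definition rA :: "'c \<Rightarrow> 'a" where
  "rA c = (SOME a. a \<in> carrier A \<and> c \<ominus>\<^bsub>C\<^esub> h2 a \<in> W)"

lemma rA: "c \<in> carrier C \<Longrightarrow> rA c \<in> carrier A \<and> c \<ominus>\<^bsub>C\<^esub> h2 (rA c) \<in> W"
proof -
  assume c: "c \<in> carrier C"
  then have "\<exists>a. a \<in> carrier A \<and> c \<ominus>\<^bsub>C\<^esub> h2 a \<in> W" using span by blast
  then show ?thesis unfolding rA_def by (rule someI_ex)
qed

lemma wd:
  assumes a: "a \<in> carrier A" and a': "a' \<in> carrier A" and c: "c \<in> carrier C"
    and ca: "c \<ominus>\<^bsub>C\<^esub> h2 a \<in> W" and ca': "c \<ominus>\<^bsub>C\<^esub> h2 a' \<in> W" and y: "y \<in> carrier B"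
  shows "y \<otimes>\<^bsub>B\<^esub> h1 a \<ominus>\<^bsub>B\<^esub> y \<otimes>\<^bsub>B\<^esub> h1 a' \<in> N"
proof -
  define d where "d = a \<ominus>\<^bsub>A\<^esub> a'"
  have d: "d \<in> carrier A" using a a' by (simp add: d_def)
  have "h2 d = (c \<ominus>\<^bsub>C\<^esub> h2 a') \<ominus>\<^bsub>C\<^esub> (c \<ominus>\<^bsub>C\<^esub> h2 a)"
  proof -
    have "h2 d = h2 a \<ominus>\<^bsub>C\<^esub> h2 a'" using a a' by (simp add: d_def h2_minus)
    also have "\<dots> = (c \<ominus>\<^bsub>C\<^esub> h2 a') \<ominus>\<^bsub>C\<^esub> (c \<ominus>\<^bsub>C\<^esub> h2 a)"
      using c H2.hom_closed[OF a] H2.hom_closed[OF a'] by algebra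
    finally show ?thesis .
  qed
  then have h2d: "h2 d \<in> W" using sub_minus[OF subW ca' ca] by simp
  obtain x where x: "x \<in> carrier A" "d = (d \<otimes>\<^bsub>A\<^esub> d) \<otimes>\<^bsub>A\<^esub> x" using reg d by blast
  define e where "e = x \<otimes>\<^bsub>A\<^esub> d"
  have e: "e \<in> carrier A" using x d by (simp add: e_def)
  have h2e: "h2 e \<in> W" unfolding e_def using sub_smult[OF subW x(1) h2d] x d by simp
  define D where "D = h1 d"
  define X where "X = h1 x"
  have DX: "D \<in> carrier B" "X \<in> carrier B" using d x by (auto simp: D_def X_def)
  have DD: "D = (D \<otimes>\<^bsub>B\<^esub> D) \<otimes>\<^bsub>B\<^esub> X"
  proof -
    have "h1 d = h1 ((d \<otimes>\<^bsub>A\<^esub> d) \<otimes>\<^bsub>A\<^esub> x)" using arg_cong[OF x(2), of h1] .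
    also have "\<dots> = (h1 d \<otimes>\<^bsub>B\<^esub> h1 d) \<otimes>\<^bsub>B\<^esub> h1 x" using d x(1) by simp
    finally show ?thesis by (simp add: D_def X_def)
  qed
  define z where "z = y \<otimes>\<^bsub>B\<^esub> h1 a \<ominus>\<^bsub>B\<^esub> y \<otimes>\<^bsub>B\<^esub> h1 a'"
  have zD: "z = y \<otimes>\<^bsub>B\<^esub> D"
  proof -
    have "D = h1 a \<ominus>\<^bsub>B\<^esub> h1 a'" using a a' by (simp add: D_def d_def h1_minus)
    then show ?thesis unfolding z_def using y H1.hom_closed[OF a] H1.hom_closed[OF a'] by algebra
  qed
  have zc: "z \<in> carrier B" using zD y DX by simp
  have "h1 e \<otimes>\<^bsub>B\<^esub> z = (X \<otimes>\<^bsub>B\<^esub> D) \<otimes>\<^bsub>B\<^esub> (y \<otimes>\<^bsub>B\<^esub> D)"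
    using x d by (simp add: e_def zD D_def X_def)
  also have "\<dots> = y \<otimes>\<^bsub>B\<^esub> ((D \<otimes>\<^bsub>B\<^esub> D) \<otimes>\<^bsub>B\<^esub> X)" using DX y by algebra
  also have "\<dots> = z" using DD zD by simp
  finally have "h1 e \<otimes>\<^bsub>B\<^esub> z = z" .
  then show ?thesis using zc e h2e unfolding N_def z_def[symmetric] by blast
qed

lemma cos_eq:
  assumes y: "y \<in> carrier B" and y': "y' \<in> carrier B" and yy: "y \<ominus>\<^bsub>B\<^esub> y' \<in> N"
  shows "N +>\<^bsub>B\<^esub> y = N +>\<^bsub>B\<^esub> y'"
proof -
  interpret I: ideal N B by (rule N_ideal)
  have "y \<in> N +>\<^bsub>B\<^esub> y'" using I.a_rcos_module_minus[OF RB.ring_axioms y' y] yy by simp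
  from I.a_repr_independence'[OF this y'] show ?thesis by simp
qed

definition Phi :: "'b \<Rightarrow> 'c \<Rightarrow> 'b set" where
  "Phi y c = N +>\<^bsub>B\<^esub> (y \<otimes>\<^bsub>B\<^esub> h1 (rA c))"

lemma Phi_eq:
  assumes c: "c \<in> carrier C" and a: "a \<in> carrier A" and ca: "c \<ominus>\<^bsub>C\<^esub> h2 a \<in> W" and y: "y \<in> carrier B"
  shows "Phi y c = N +>\<^bsub>B\<^esub> (y \<otimes>\<^bsub>B\<^esub> h1 a)"
  unfolding Phi_def using rA[OF c] a y wd[OF _ a c _ ca y, of "rA c"]
  by (intro cos_eq) auto

lemma test_Phi: "test A B C h1 h2 (B Quot N) Phi"
proof -
  interpret I: ideal N B by (rule N_ideal)
  have hom: "(+>\<^bsub>B\<^esub>) N \<in> ring_hom B (B Quot N)" by (rule I.rcos_ring_hom)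
  show ?thesis unfolding test_def
  proof (intro conjI ballI)
    show "abelian_group (B Quot N)" using ring.is_abelian_group[OF I.quotient_is_ring] .
  next
    fix x y assume x: "x \<in> carrier B" and y: "y \<in> carrier C"
    show "Phi x y \<in> carrier (B Quot N)" unfolding Phi_def
      using ring_hom_closed[OF hom] x rA[OF y] by simp
  next
    fix x1 x2 y assume x: "x1 \<in> carrier B" "x2 \<in> carrier B" and y: "y \<in> carrier C"
    have h: "h1 (rA y) \<in> carrier B" using rA[OF y] by simp
    have "(x1 \<oplus>\<^bsub>B\<^esub> x2) \<otimes>\<^bsub>B\<^esub> h1 (rA y) = x1 \<otimes>\<^bsub>B\<^esub> h1 (rA y) \<oplus>\<^bsub>B\<^esub> x2 \<otimes>\<^bsub>B\<^esub> h1 (rA y)"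
      using x h by algebra
    then show "Phi (x1 \<oplus>\<^bsub>B\<^esub> x2) y = Phi x1 y \<oplus>\<^bsub>B Quot N\<^esub> Phi x2 y"
      unfolding Phi_def using ring_hom_add[OF hom] x h by simp
  next
    fix x y1 y2 assume x: "x \<in> carrier B" and y: "y1 \<in> carrier C" "y2 \<in> carrier C"
    obtain r1 r2 where r: "r1 \<in> carrier A" "y1 \<ominus>\<^bsub>C\<^esub> h2 r1 \<in> W" "r2 \<in> carrier A" "y2 \<ominus>\<^bsub>C\<^esub> h2 r2 \<in> W"
      using rA[OF y(1)] rA[OF y(2)] by blast
    have "(y1 \<oplus>\<^bsub>C\<^esub> y2) \<ominus>\<^bsub>C\<^esub> h2 (r1 \<oplus>\<^bsub>A\<^esub> r2) = (y1 \<ominus>\<^bsub>C\<^esub> h2 r1) \<oplus>\<^bsub>C\<^esub> (y2 \<ominus>\<^bsub>C\<^esub> h2 r2)"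
    proof -
      have "h2 (r1 \<oplus>\<^bsub>A\<^esub> r2) = h2 r1 \<oplus>\<^bsub>C\<^esub> h2 r2" using r by simp
      then show ?thesis using y H2.hom_closed[OF r(1)] H2.hom_closed[OF r(3)] by simp algebra
    qed
    then have w: "(y1 \<oplus>\<^bsub>C\<^esub> y2) \<ominus>\<^bsub>C\<^esub> h2 (r1 \<oplus>\<^bsub>A\<^esub> r2) \<in> W" using sub_add[OF subW r(2) r(4)] by simp
    have e0: "Phi x (y1 \<oplus>\<^bsub>C\<^esub> y2) = N +>\<^bsub>B\<^esub> (x \<otimes>\<^bsub>B\<^esub> h1 (r1 \<oplus>\<^bsub>A\<^esub> r2))"
      using Phi_eq[OF _ _ w x] y r by simp
    have e1: "Phi x y1 = N +>\<^bsub>B\<^esub> (x \<otimes>\<^bsub>B\<^esub> h1 r1)" using Phi_eq[OF y(1) r(1) r(2) x] .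
    have e2: "Phi x y2 = N +>\<^bsub>B\<^esub> (x \<otimes>\<^bsub>B\<^esub> h1 r2)" using Phi_eq[OF y(2) r(3) r(4) x] .
    have "x \<otimes>\<^bsub>B\<^esub> h1 (r1 \<oplus>\<^bsub>A\<^esub> r2) = x \<otimes>\<^bsub>B\<^esub> h1 r1 \<oplus>\<^bsub>B\<^esub> x \<otimes>\<^bsub>B\<^esub> h1 r2"
      using r x by (simp add: RB.r_distr)
    then show "Phi x (y1 \<oplus>\<^bsub>C\<^esub> y2) = Phi x y1 \<oplus>\<^bsub>B Quot N\<^esub> Phi x y2"
      unfolding e0 e1 e2 using ring_hom_add[OF hom] x r by simp
  next
    fix a x y assume a: "a \<in> carrier A" and x: "x \<in> carrier B" and y: "y \<in> carrier C"
    obtain r where r: "r \<in> carrier A" "y \<ominus>\<^bsub>C\<^esub> h2 r \<in> W" using rA[OF y] by blast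
    have "h2 a \<otimes>\<^bsub>C\<^esub> y \<ominus>\<^bsub>C\<^esub> h2 (a \<otimes>\<^bsub>A\<^esub> r) = h2 a \<otimes>\<^bsub>C\<^esub> (y \<ominus>\<^bsub>C\<^esub> h2 r)"
    proof -
      have "h2 (a \<otimes>\<^bsub>A\<^esub> r) = h2 a \<otimes>\<^bsub>C\<^esub> h2 r" using a r by simp
      moreover have "h2 a \<otimes>\<^bsub>C\<^esub> y \<ominus>\<^bsub>C\<^esub> h2 a \<otimes>\<^bsub>C\<^esub> h2 r = h2 a \<otimes>\<^bsub>C\<^esub> (y \<ominus>\<^bsub>C\<^esub> h2 r)"
        using y H2.hom_closed[OF a] H2.hom_closed[OF r(1)] by algebra
      ultimately show ?thesis by simp
    qed
    then have w: "h2 a \<otimes>\<^bsub>C\<^esub> y \<ominus>\<^bsub>C\<^esub> h2 (a \<otimes>\<^bsub>A\<^esub> r) \<in> W" using sub_smult[OF subW a r(2)] by simp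
    have e1: "Phi x (h2 a \<otimes>\<^bsub>C\<^esub> y) = N +>\<^bsub>B\<^esub> (x \<otimes>\<^bsub>B\<^esub> h1 (a \<otimes>\<^bsub>A\<^esub> r))"
      using Phi_eq[OF _ _ w x] a y r by simp
    have e2: "Phi (h1 a \<otimes>\<^bsub>B\<^esub> x) y = N +>\<^bsub>B\<^esub> ((h1 a \<otimes>\<^bsub>B\<^esub> x) \<otimes>\<^bsub>B\<^esub> h1 r)"
      using Phi_eq[OF y r(1) r(2)] a x by simp
    have "x \<otimes>\<^bsub>B\<^esub> h1 (a \<otimes>\<^bsub>A\<^esub> r) = (h1 a \<otimes>\<^bsub>B\<^esub> x) \<otimes>\<^bsub>B\<^esub> h1 r"
    proof -
      have "h1 (a \<otimes>\<^bsub>A\<^esub> r) = h1 a \<otimes>\<^bsub>B\<^esub> h1 r" using a r by simp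
      moreover have "x \<otimes>\<^bsub>B\<^esub> (h1 a \<otimes>\<^bsub>B\<^esub> h1 r) = (h1 a \<otimes>\<^bsub>B\<^esub> x) \<otimes>\<^bsub>B\<^esub> h1 r"
        using x H1.hom_closed[OF a] H1.hom_closed[OF r(1)] by algebra
      ultimately show ?thesis by simp
    qed
    then show "Phi (h1 a \<otimes>\<^bsub>B\<^esub> x) y = Phi x (h2 a \<otimes>\<^bsub>C\<^esub> y)" using e1 e2 by simp
  qed
qed

lemma Phi_nonzero: "Phi b \<one>\<^bsub>C\<^esub> \<noteq> \<zero>\<^bsub>B Quot N\<^esub>"
proof
  assume H: "Phi b \<one>\<^bsub>C\<^esub> = \<zero>\<^bsub>B Quot N\<^esub>"
  interpret I: ideal N B by (rule N_ideal)
  have "\<one>\<^bsub>C\<^esub> \<ominus>\<^bsub>C\<^esub> h2 \<one>\<^bsub>A\<^esub> = \<zero>\<^bsub>C\<^esub>" by (simp add: RC.minus_eq RC.r_neg)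
  then have "\<one>\<^bsub>C\<^esub> \<ominus>\<^bsub>C\<^esub> h2 \<one>\<^bsub>A\<^esub> \<in> W" using sub_zero[OF subW] by simp
  then have "Phi b \<one>\<^bsub>C\<^esub> = N +>\<^bsub>B\<^esub> (b \<otimes>\<^bsub>B\<^esub> h1 \<one>\<^bsub>A\<^esub>)" using Phi_eq[OF RC.one_closed RA.one_closed _ b] by simp
  then have "N +>\<^bsub>B\<^esub> b = N" using H b by (simp add: FactRing_def)
  then have "b \<in> N" using I.a_rcos_self[OF b] by simp
  then show False using b_notin_N by simp
qed

end

lemma (in key_setup) KEY: "\<exists>(G::'b set ring) \<Phi>. test A B C h1 h2 G \<Phi> \<and> \<Phi> b \<one>\<^bsub>C\<^esub> \<noteq> \<zero>\<^bsub>G\<^esub>"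
proof -
  obtain W where W: "sub W" "cnd W" "\<And>W'. sub W' \<Longrightarrow> cnd W' \<Longrightarrow> W \<subseteq> W' \<Longrightarrow> W' = W"
    using zorn_W by blast
  interpret M: key_max A B C h1 h2 b W
    by (intro key_max.intro key_max_axioms.intro key_setup_axioms) (use W in auto)
  show ?thesis using M.test_Phi M.Phi_nonzero by blast
qed

locale amal =
  fixes A :: "'a ring" and B :: "'b ring" and C :: "'c ring" and h1 h2
  assumes cA: "cring A" and cB: "cring B" and cC: "cring C"
    and h1: "h1 \<in> ring_hom A B" and h2: "h2 \<in> ring_hom A C"

sublocale amal \<subseteq> RA: cring A by (rule cA)
sublocale amal \<subseteq> RB: cring B by (rule cB)
sublocale amal \<subseteq> RC: cring C by (rule cC)
sublocale amal \<subseteq> H1: ring_hom_cring A B h1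
  by (simp add: ring_hom_cring_def ring_hom_cring_axioms_def cA cB h1)
sublocale amal \<subseteq> H2: ring_hom_cring A C h2
  by (simp add: ring_hom_cring_def ring_hom_cring_axioms_def cA cC h2)

context amal
begin

lemma testD:
  assumes "test A B C h1 h2 G \<Phi>"
  shows "abelian_group G"
    and "\<And>x y. x \<in> carrier B \<Longrightarrow> y \<in> carrier C \<Longrightarrow> \<Phi> x y \<in> carrier G"
    and "\<And>x1 x2 y. x1 \<in> carrier B \<Longrightarrow> x2 \<in> carrier B \<Longrightarrow> y \<in> carrier C \<Longrightarrow> \<Phi> (x1 \<oplus>\<^bsub>B\<^esub> x2) y = \<Phi> x1 y \<oplus>\<^bsub>G\<^esub> \<Phi> x2 y"
    and "\<And>x y1 y2. x \<in> carrier B \<Longrightarrow> y1 \<in> carrier C \<Longrightarrow> y2 \<in> carrier C \<Longrightarrow> \<Phi> x (y1 \<oplus>\<^bsub>C\<^esub> y2) = \<Phi> x y1 \<oplus>\<^bsub>G\<^esub> \<Phi> x y2"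
    and "\<And>a x y. a \<in> carrier A \<Longrightarrow> x \<in> carrier B \<Longrightarrow> y \<in> carrier C \<Longrightarrow> \<Phi> (h1 a \<otimes>\<^bsub>B\<^esub> x) y = \<Phi> x (h2 a \<otimes>\<^bsub>C\<^esub> y)"
  using assms unfolding test_def by blast+

lemma test_zero1:
  assumes t: "test A B C h1 h2 G \<Phi>" and c: "c \<in> carrier C"
  shows "\<Phi> \<zero>\<^bsub>B\<^esub> c = \<zero>\<^bsub>G\<^esub>"
proof -
  interpret G: abelian_group G by (rule testD(1)[OF t])
  have z: "\<Phi> \<zero>\<^bsub>B\<^esub> c \<in> carrier G" using testD(2)[OF t] c by simp
  have "\<Phi> \<zero>\<^bsub>B\<^esub> c \<oplus>\<^bsub>G\<^esub> \<Phi> \<zero>\<^bsub>B\<^esub> c = \<Phi> \<zero>\<^bsub>B\<^esub> c"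
    using testD(3)[OF t RB.zero_closed RB.zero_closed c] by simp
  then show ?thesis using G.add.l_cancel_one[OF z z] by simp
qed

definition evl :: "'g ring \<Rightarrow> ('b \<Rightarrow> 'c \<Rightarrow> 'g) \<Rightarrow> ('b \<times> 'c) list \<Rightarrow> 'g" where
  "evl G \<Phi> L = ev G (\<lambda>p. \<Phi> (fst p) (snd p)) L"

definition wf :: "('b \<times> 'c) list \<Rightarrow> bool" where
  "wf L \<longleftrightarrow> set L \<subseteq> carrier B \<times> carrier C"

definition lmul :: "('b \<times> 'c) list \<Rightarrow> ('b \<times> 'c) list \<Rightarrow> ('b \<times> 'c) list" where
  "lmul L M = concat (map (\<lambda>p. map (\<lambda>q. (fst p \<otimes>\<^bsub>B\<^esub> fst q, snd p \<otimes>\<^bsub>C\<^esub> snd q)) M) L)"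

definition lneg :: "('b \<times> 'c) list \<Rightarrow> ('b \<times> 'c) list" where
  "lneg L = map (\<lambda>p. (\<ominus>\<^bsub>B\<^esub> fst p, snd p)) L"

definition shift :: "('b \<Rightarrow> 'c \<Rightarrow> 'g) \<Rightarrow> 'b \<Rightarrow> 'c \<Rightarrow> 'b \<Rightarrow> 'c \<Rightarrow> 'g" where
  "shift \<Phi> b c = (\<lambda>b' c'. \<Phi> (b \<otimes>\<^bsub>B\<^esub> b') (c \<otimes>\<^bsub>C\<^esub> c'))"

definition mulf :: "'g ring \<Rightarrow> ('b \<Rightarrow> 'c \<Rightarrow> 'g) \<Rightarrow> ('b \<times> 'c) list \<Rightarrow> 'b \<Rightarrow> 'c \<Rightarrow> 'g" where
  "mulf G \<Phi> M = (\<lambda>b c. evl G (shift \<Phi> b c) M)"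

lemma wf_Nil[simp]: "wf []" by (simp add: wf_def)
lemma wf_Cons[simp]: "wf (p # L) \<longleftrightarrow> fst p \<in> carrier B \<and> snd p \<in> carrier C \<and> wf L"
  by (cases p) (auto simp: wf_def)
lemma wf_append[simp]: "wf (L @ M) \<longleftrightarrow> wf L \<and> wf M" by (auto simp: wf_def)
lemma wf_lneg: "wf L \<Longrightarrow> wf (lneg L)" by (auto simp: wf_def lneg_def)
lemma wfD: "wf L \<Longrightarrow> p \<in> set L \<Longrightarrow> fst p \<in> carrier B \<and> snd p \<in> carrier C"
  by (auto simp: wf_def)
lemma wf_lmul: "wf L \<Longrightarrow> wf M \<Longrightarrow> wf (lmul L M)"
  unfolding lmul_def wf_def[of "concat _"]
proof
  fix p assume L: "wf L" and M: "wf M" and "p \<in> set (concat (map (\<lambda>p. map (\<lambda>q. (fst p \<otimes>\<^bsub>B\<^esub> fst q, snd p \<otimes>\<^bsub>C\<^esub> snd q)) M) L))"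
  then obtain q r where "q \<in> set L" "r \<in> set M" "p = (fst q \<otimes>\<^bsub>B\<^esub> fst r, snd q \<otimes>\<^bsub>C\<^esub> snd r)" by auto
  then show "p \<in> carrier B \<times> carrier C" using wfD[OF L] wfD[OF M] by auto
qed
lemma evl_fun_closed: "test A B C h1 h2 G \<Phi> \<Longrightarrow> wf L \<Longrightarrow> p \<in> set L \<Longrightarrow> \<Phi> (fst p) (snd p) \<in> carrier G"
  using wfD testD(2) by blast

lemma evl_Nil[simp]: "evl G \<Phi> [] = \<zero>\<^bsub>G\<^esub>" by (simp add: evl_def)
lemma evl_Cons[simp]: "evl G \<Phi> (p # L) = \<Phi> (fst p) (snd p) \<oplus>\<^bsub>G\<^esub> evl G \<Phi> L" by (simp add: evl_def)

lemma evl_closed: "test A B C h1 h2 G \<Phi> \<Longrightarrow> wf L \<Longrightarrow> evl G \<Phi> L \<in> carrier G"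
  unfolding evl_def by (rule abelian_group.ev_closed[OF testD(1)]) (auto intro: evl_fun_closed)

lemma evl_append: "test A B C h1 h2 G \<Phi> \<Longrightarrow> wf L \<Longrightarrow> wf M \<Longrightarrow> evl G \<Phi> (L @ M) = evl G \<Phi> L \<oplus>\<^bsub>G\<^esub> evl G \<Phi> M"
  unfolding evl_def by (rule abelian_group.ev_append[OF testD(1)]) (auto intro: evl_fun_closed)

lemma evl_cong: "wf L \<Longrightarrow> (\<And>x y. x \<in> carrier B \<Longrightarrow> y \<in> carrier C \<Longrightarrow> \<Phi> x y = \<Psi> x y) \<Longrightarrow> evl G \<Phi> L = evl G \<Psi> L"
  by (induction L) auto

lemma test_shift:
  assumes t: "test A B C h1 h2 G \<Phi>" and b: "b \<in> carrier B" and c: "c \<in> carrier C"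
  shows "test A B C h1 h2 G (shift \<Phi> b c)"
  unfolding test_def shift_def
proof (intro conjI ballI)
  show "abelian_group G" by (rule testD(1)[OF t])
next
  fix x y assume "x \<in> carrier B" "y \<in> carrier C"
  then show "\<Phi> (b \<otimes>\<^bsub>B\<^esub> x) (c \<otimes>\<^bsub>C\<^esub> y) \<in> carrier G" using testD(2)[OF t] b c by simp
next
  fix x1 x2 y assume x: "x1 \<in> carrier B" "x2 \<in> carrier B" and y: "y \<in> carrier C"
  then show "\<Phi> (b \<otimes>\<^bsub>B\<^esub> (x1 \<oplus>\<^bsub>B\<^esub> x2)) (c \<otimes>\<^bsub>C\<^esub> y) = \<Phi> (b \<otimes>\<^bsub>B\<^esub> x1) (c \<otimes>\<^bsub>C\<^esub> y) \<oplus>\<^bsub>G\<^esub> \<Phi> (b \<otimes>\<^bsub>B\<^esub> x2) (c \<otimes>\<^bsub>C\<^esub> y)"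
    using testD(3)[OF t] b c by (simp add: RB.r_distr)
next
  fix x y1 y2 assume x: "x \<in> carrier B" and y: "y1 \<in> carrier C" "y2 \<in> carrier C"
  then show "\<Phi> (b \<otimes>\<^bsub>B\<^esub> x) (c \<otimes>\<^bsub>C\<^esub> (y1 \<oplus>\<^bsub>C\<^esub> y2)) = \<Phi> (b \<otimes>\<^bsub>B\<^esub> x) (c \<otimes>\<^bsub>C\<^esub> y1) \<oplus>\<^bsub>G\<^esub> \<Phi> (b \<otimes>\<^bsub>B\<^esub> x) (c \<otimes>\<^bsub>C\<^esub> y2)"
    using testD(4)[OF t] b c by (simp add: RC.r_distr)
next
  fix a x y assume a: "a \<in> carrier A" and x: "x \<in> carrier B" and y: "y \<in> carrier C"
  have "\<Phi> (b \<otimes>\<^bsub>B\<^esub> (h1 a \<otimes>\<^bsub>B\<^esub> x)) (c \<otimes>\<^bsub>C\<^esub> y) = \<Phi> (h1 a \<otimes>\<^bsub>B\<^esub> (b \<otimes>\<^bsub>B\<^esub> x)) (c \<otimes>\<^bsub>C\<^esub> y)"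
    using a x b by (simp add: RB.m_lcomm)
  also have "\<dots> = \<Phi> (b \<otimes>\<^bsub>B\<^esub> x) (h2 a \<otimes>\<^bsub>C\<^esub> (c \<otimes>\<^bsub>C\<^esub> y))" using testD(5)[OF t] a x b y c by simp
  also have "\<dots> = \<Phi> (b \<otimes>\<^bsub>B\<^esub> x) (c \<otimes>\<^bsub>C\<^esub> (h2 a \<otimes>\<^bsub>C\<^esub> y))" using a y c by (simp add: RC.m_lcomm)
  finally show "\<Phi> (b \<otimes>\<^bsub>B\<^esub> (h1 a \<otimes>\<^bsub>B\<^esub> x)) (c \<otimes>\<^bsub>C\<^esub> y) = \<Phi> (b \<otimes>\<^bsub>B\<^esub> x) (c \<otimes>\<^bsub>C\<^esub> (h2 a \<otimes>\<^bsub>C\<^esub> y))" .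
qed

lemma evl_add_fun:
  assumes "abelian_group G" "wf L" "\<And>x y. x \<in> carrier B \<Longrightarrow> y \<in> carrier C \<Longrightarrow> \<Phi> x y \<in> carrier G"
    "\<And>x y. x \<in> carrier B \<Longrightarrow> y \<in> carrier C \<Longrightarrow> \<Psi> x y \<in> carrier G"
  shows "evl G (\<lambda>x y. \<Phi> x y \<oplus>\<^bsub>G\<^esub> \<Psi> x y) L = evl G \<Phi> L \<oplus>\<^bsub>G\<^esub> evl G \<Psi> L"
  unfolding evl_def using assms wfD[OF assms(2)]
  by (intro abelian_group.ev_add[OF assms(1)]) auto

lemma test_mulf:
  assumes t: "test A B C h1 h2 G \<Phi>" and M: "wf M"
  shows "test A B C h1 h2 G (mulf G \<Phi> M)"
  unfolding test_def mulf_def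
proof (intro conjI ballI)
  show ag: "abelian_group G" by (rule testD(1)[OF t])
  fix x y assume "x \<in> carrier B" "y \<in> carrier C"
  then show "evl G (shift \<Phi> x y) M \<in> carrier G" using evl_closed[OF test_shift[OF t] M] by simp
next
  fix x1 x2 y assume x: "x1 \<in> carrier B" "x2 \<in> carrier B" and y: "y \<in> carrier C"
  have "evl G (shift \<Phi> (x1 \<oplus>\<^bsub>B\<^esub> x2) y) M = evl G (\<lambda>b c. shift \<Phi> x1 y b c \<oplus>\<^bsub>G\<^esub> shift \<Phi> x2 y b c) M"
    by (rule evl_cong[OF M]) (use x y testD(3)[OF t] in \<open>simp add: shift_def RB.l_distr\<close>)
  also have "\<dots> = evl G (shift \<Phi> x1 y) M \<oplus>\<^bsub>G\<^esub> evl G (shift \<Phi> x2 y) M"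
    by (rule evl_add_fun[OF testD(1)[OF t] M]) (use x y testD(2)[OF t] in \<open>auto simp: shift_def\<close>)
  finally show "evl G (shift \<Phi> (x1 \<oplus>\<^bsub>B\<^esub> x2) y) M = evl G (shift \<Phi> x1 y) M \<oplus>\<^bsub>G\<^esub> evl G (shift \<Phi> x2 y) M" .
next
  fix x y1 y2 assume x: "x \<in> carrier B" and y: "y1 \<in> carrier C" "y2 \<in> carrier C"
  have "evl G (shift \<Phi> x (y1 \<oplus>\<^bsub>C\<^esub> y2)) M = evl G (\<lambda>b c. shift \<Phi> x y1 b c \<oplus>\<^bsub>G\<^esub> shift \<Phi> x y2 b c) M"
    by (rule evl_cong[OF M]) (use x y testD(4)[OF t] in \<open>simp add: shift_def RC.l_distr\<close>)
  also have "\<dots> = evl G (shift \<Phi> x y1) M \<oplus>\<^bsub>G\<^esub> evl G (shift \<Phi> x y2) M"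
    by (rule evl_add_fun[OF testD(1)[OF t] M]) (use x y testD(2)[OF t] in \<open>auto simp: shift_def\<close>)
  finally show "evl G (shift \<Phi> x (y1 \<oplus>\<^bsub>C\<^esub> y2)) M = evl G (shift \<Phi> x y1) M \<oplus>\<^bsub>G\<^esub> evl G (shift \<Phi> x y2) M" .
next
  fix a x y assume a: "a \<in> carrier A" and x: "x \<in> carrier B" and y: "y \<in> carrier C"
  show "evl G (shift \<Phi> (h1 a \<otimes>\<^bsub>B\<^esub> x) y) M = evl G (shift \<Phi> x (h2 a \<otimes>\<^bsub>C\<^esub> y)) M"
  proof (rule evl_cong[OF M])
    fix b c assume b: "b \<in> carrier B" and c: "c \<in> carrier C"
    have "\<Phi> ((h1 a \<otimes>\<^bsub>B\<^esub> x) \<otimes>\<^bsub>B\<^esub> b) (y \<otimes>\<^bsub>C\<^esub> c) = \<Phi> (h1 a \<otimes>\<^bsub>B\<^esub> (x \<otimes>\<^bsub>B\<^esub> b)) (y \<otimes>\<^bsub>C\<^esub> c)"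
      using a x b by (simp add: RB.m_assoc)
    also have "\<dots> = \<Phi> (x \<otimes>\<^bsub>B\<^esub> b) (h2 a \<otimes>\<^bsub>C\<^esub> (y \<otimes>\<^bsub>C\<^esub> c))" using testD(5)[OF t] a x b y c by simp
    also have "\<dots> = \<Phi> (x \<otimes>\<^bsub>B\<^esub> b) ((h2 a \<otimes>\<^bsub>C\<^esub> y) \<otimes>\<^bsub>C\<^esub> c)" using a y c by (simp add: RC.m_assoc)
    finally show "shift \<Phi> (h1 a \<otimes>\<^bsub>B\<^esub> x) y b c = shift \<Phi> x (h2 a \<otimes>\<^bsub>C\<^esub> y) b c" by (simp add: shift_def)
  qed
qed

lemma evl_lmul:
  assumes t: "test A B C h1 h2 G \<Phi>" and L: "wf L" and M: "wf M"
  shows "evl G \<Phi> (lmul L M) = evl G (mulf G \<Phi> M) L"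
proof -
  interpret G: abelian_group G by (rule testD(1)[OF t])
  have "evl G \<Phi> (lmul L M) = ev G (ev G (\<lambda>p. \<Phi> (fst p) (snd p)))
      (map (\<lambda>p. map (\<lambda>q. (fst p \<otimes>\<^bsub>B\<^esub> fst q, snd p \<otimes>\<^bsub>C\<^esub> snd q)) M) L)"
    unfolding evl_def lmul_def
  proof (rule G.ev_concat)
    fix l p assume l: "l \<in> set (map (\<lambda>p. map (\<lambda>q. (fst p \<otimes>\<^bsub>B\<^esub> fst q, snd p \<otimes>\<^bsub>C\<^esub> snd q)) M) L)" and p: "p \<in> set l"
    have "p \<in> set (lmul L M)" unfolding lmul_def set_concat using l p by blast
    then show "\<Phi> (fst p) (snd p) \<in> carrier G" using evl_fun_closed[OF t wf_lmul[OF L M]] by blast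
  qed
  also have "\<dots> = evl G (mulf G \<Phi> M) L"
    unfolding G.ev_map evl_def mulf_def shift_def by (simp add: o_def G.ev_map)
  finally show ?thesis .
qed

lemma evl_lneg:
  assumes t: "test A B C h1 h2 G \<Phi>" and L: "wf L"
  shows "evl G \<Phi> (lneg L) \<oplus>\<^bsub>G\<^esub> evl G \<Phi> L = \<zero>\<^bsub>G\<^esub>"
proof -
  interpret G: abelian_group G by (rule testD(1)[OF t])
  have "evl G \<Phi> (lneg L) = evl G (\<lambda>x y. \<Phi> (\<ominus>\<^bsub>B\<^esub> x) y) L"
    unfolding evl_def lneg_def G.ev_map by (simp add: o_def)
  then have "evl G \<Phi> (lneg L) \<oplus>\<^bsub>G\<^esub> evl G \<Phi> L = evl G (\<lambda>x y. \<Phi> (\<ominus>\<^bsub>B\<^esub> x) y \<oplus>\<^bsub>G\<^esub> \<Phi> x y) L"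
    using evl_add_fun[OF G.abelian_group_axioms L, of "\<lambda>x y. \<Phi> (\<ominus>\<^bsub>B\<^esub> x) y" \<Phi>] testD(2)[OF t] by simp
  also have "\<dots> = evl G (\<lambda>x y. \<zero>\<^bsub>G\<^esub>) L"
  proof (rule evl_cong[OF L])
    fix x y assume x: "x \<in> carrier B" and y: "y \<in> carrier C"
    have "\<Phi> (\<ominus>\<^bsub>B\<^esub> x) y \<oplus>\<^bsub>G\<^esub> \<Phi> x y = \<Phi> (\<ominus>\<^bsub>B\<^esub> x \<oplus>\<^bsub>B\<^esub> x) y" using testD(3)[OF t] x y by simp
    also have "\<dots> = \<zero>\<^bsub>G\<^esub>" using x y test_zero1[OF t y] by (simp add: RB.l_neg)
    finally show "\<Phi> (\<ominus>\<^bsub>B\<^esub> x) y \<oplus>\<^bsub>G\<^esub> \<Phi> x y = \<zero>\<^bsub>G\<^esub>" .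
  qed
  also have "\<dots> = \<zero>\<^bsub>G\<^esub>" unfolding evl_def by (rule G.ev_zero)
  finally show ?thesis .
qed

end

context amal
begin

definition eqv :: "('b \<times> 'c) list \<Rightarrow> ('b \<times> 'c) list \<Rightarrow> bool" where
  "eqv L M \<longleftrightarrow> wf L \<and> wf M \<and>
     (\<forall>(G::'b set ring) \<Phi>. test A B C h1 h2 G \<Phi> \<longrightarrow> evl G \<Phi> L = evl G \<Phi> M) \<and>
     (\<forall>(G::'c set ring) \<Phi>. test A B C h1 h2 G \<Phi> \<longrightarrow> evl G \<Phi> L = evl G \<Phi> M)"

definition cls :: "('b \<times> 'c) list \<Rightarrow> ('b \<times> 'c) list set" where
  "cls L = {M. eqv L M}"

definition rep :: "('b \<times> 'c) list set \<Rightarrow> ('b \<times> 'c) list" where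
  "rep X = (SOME L. wf L \<and> X = cls L)"

definition T :: "('b \<times> 'c) list set ring" where
  "T = \<lparr>carrier = cls ` {L. wf L}, mult = (\<lambda>X Y. cls (lmul (rep X) (rep Y))),
        one = cls [(\<one>\<^bsub>B\<^esub>, \<one>\<^bsub>C\<^esub>)], zero = cls [], add = (\<lambda>X Y. cls (rep X @ rep Y))\<rparr>"

lemma T_simps:
  "carrier T = cls ` {L. wf L}" "X \<otimes>\<^bsub>T\<^esub> Y = cls (lmul (rep X) (rep Y))" "\<one>\<^bsub>T\<^esub> = cls [(\<one>\<^bsub>B\<^esub>, \<one>\<^bsub>C\<^esub>)]"
  "\<zero>\<^bsub>T\<^esub> = cls []" "X \<oplus>\<^bsub>T\<^esub> Y = cls (rep X @ rep Y)"
  by (simp_all add: T_def)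

lemma eqv_refl: "wf L \<Longrightarrow> eqv L L" by (simp add: eqv_def)
lemma eqv_sym: "eqv L M \<Longrightarrow> eqv M L" by (simp add: eqv_def)
lemma eqv_trans: "eqv L M \<Longrightarrow> eqv M N \<Longrightarrow> eqv L N" by (simp add: eqv_def)
lemma eqv_wf: "eqv L M \<Longrightarrow> wf L \<and> wf M" by (simp add: eqv_def)

lemma cls_eq: "eqv L M \<Longrightarrow> cls L = cls M"
  unfolding cls_def using eqv_sym eqv_trans by blast

lemma cls_eqD: "wf M \<Longrightarrow> cls L = cls M \<Longrightarrow> eqv L M"
proof -
  assume M: "wf M" and e: "cls L = cls M"
  have "M \<in> cls M" using eqv_refl[OF M] by (simp add: cls_def)
  then have "M \<in> cls L" using e by simp
  then show "eqv L M" by (simp add: cls_def)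
qed

lemma cls_in_T: "wf L \<Longrightarrow> cls L \<in> carrier T" by (simp add: T_simps)

lemma rep_spec: "X \<in> carrier T \<Longrightarrow> wf (rep X) \<and> X = cls (rep X)"
proof -
  assume "X \<in> carrier T"
  then have "\<exists>L. wf L \<and> X = cls L" by (auto simp: T_simps)
  then show ?thesis unfolding rep_def by (rule someI_ex)
qed

lemma rep_wf: "X \<in> carrier T \<Longrightarrow> wf (rep X)" using rep_spec by blast

lemma rep_cls_eqv: "wf L \<Longrightarrow> eqv L (rep (cls L))"
proof -
  assume L: "wf L"
  have "wf (rep (cls L)) \<and> cls L = cls (rep (cls L))" by (rule rep_spec[OF cls_in_T[OF L]])
  then show ?thesis using cls_eqD by blast
qed

definition good :: "'g ring \<Rightarrow> bool" where
  "good G \<longleftrightarrow> (\<forall>\<Phi> L. test A B C h1 h2 G \<Phi> \<longrightarrow> wf L \<longrightarrow> evl G \<Phi> (rep (cls L)) = evl G \<Phi> L)"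

lemma good_b: "good (G::'b set ring)"
  unfolding good_def using rep_cls_eqv unfolding eqv_def by metis

lemma good_c: "good (G::'c set ring)"
  unfolding good_def using rep_cls_eqv unfolding eqv_def by metis

lemma T_eq:
  assumes X: "X \<in> carrier T" and Y: "Y \<in> carrier T"
    and b: "\<And>(G::'b set ring) \<Phi>. test A B C h1 h2 G \<Phi> \<Longrightarrow> evl G \<Phi> (rep X) = evl G \<Phi> (rep Y)"
    and c: "\<And>(G::'c set ring) \<Phi>. test A B C h1 h2 G \<Phi> \<Longrightarrow> evl G \<Phi> (rep X) = evl G \<Phi> (rep Y)"
  shows "X = Y"
proof -
  have "eqv (rep X) (rep Y)" unfolding eqv_def using rep_wf[OF X] rep_wf[OF Y] b c by blast
  then have "cls (rep X) = cls (rep Y)" by (rule cls_eq)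
  then show ?thesis using rep_spec[OF X] rep_spec[OF Y] by simp
qed

lemma ev_cls: "good G \<Longrightarrow> test A B C h1 h2 G \<Phi> \<Longrightarrow> wf L \<Longrightarrow> evl G \<Phi> (rep (cls L)) = evl G \<Phi> L"
  unfolding good_def by blast

lemma ev_add:
  assumes g: "good G" and t: "test A B C h1 h2 G \<Phi>" and X: "X \<in> carrier T" and Y: "Y \<in> carrier T"
  shows "evl G \<Phi> (rep (X \<oplus>\<^bsub>T\<^esub> Y)) = evl G \<Phi> (rep X) \<oplus>\<^bsub>G\<^esub> evl G \<Phi> (rep Y)"
  unfolding T_simps using ev_cls[OF g t] evl_append[OF t rep_wf[OF X] rep_wf[OF Y]] rep_wf[OF X] rep_wf[OF Y]
  by simp

lemma ev_mul:
  assumes g: "good G" and t: "test A B C h1 h2 G \<Phi>" and X: "X \<in> carrier T" and Y: "Y \<in> carrier T"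
  shows "evl G \<Phi> (rep (X \<otimes>\<^bsub>T\<^esub> Y)) = evl G (mulf G \<Phi> (rep Y)) (rep X)"
  unfolding T_simps using ev_cls[OF g t wf_lmul[OF rep_wf[OF X] rep_wf[OF Y]]] evl_lmul[OF t rep_wf[OF X] rep_wf[OF Y]]
  by simp

lemma ev_zero: "good G \<Longrightarrow> test A B C h1 h2 G \<Phi> \<Longrightarrow> evl G \<Phi> (rep \<zero>\<^bsub>T\<^esub>) = \<zero>\<^bsub>G\<^esub>"
  unfolding T_simps using ev_cls[of G \<Phi> "[]"] by simp

lemma ev_one: "good G \<Longrightarrow> test A B C h1 h2 G \<Phi> \<Longrightarrow> evl G \<Phi> (rep \<one>\<^bsub>T\<^esub>) = \<Phi> \<one>\<^bsub>B\<^esub> \<one>\<^bsub>C\<^esub> \<oplus>\<^bsub>G\<^esub> \<zero>\<^bsub>G\<^esub>"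
  unfolding T_simps using ev_cls[of G \<Phi> "[(\<one>\<^bsub>B\<^esub>, \<one>\<^bsub>C\<^esub>)]"] by simp

lemma ev_T_closed: "test A B C h1 h2 G \<Phi> \<Longrightarrow> X \<in> carrier T \<Longrightarrow> evl G \<Phi> (rep X) \<in> carrier G"
  using evl_closed rep_wf by blast

lemma T_add_closed: "X \<in> carrier T \<Longrightarrow> Y \<in> carrier T \<Longrightarrow> X \<oplus>\<^bsub>T\<^esub> Y \<in> carrier T"
  unfolding T_simps(5) using rep_wf by (intro cls_in_T) simp
lemma T_mult_closed: "X \<in> carrier T \<Longrightarrow> Y \<in> carrier T \<Longrightarrow> X \<otimes>\<^bsub>T\<^esub> Y \<in> carrier T"
  unfolding T_simps(2) using rep_wf by (intro cls_in_T wf_lmul)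
lemma T_zero_closed: "\<zero>\<^bsub>T\<^esub> \<in> carrier T" unfolding T_simps(4) by (rule cls_in_T) simp
lemma T_one_closed: "\<one>\<^bsub>T\<^esub> \<in> carrier T" unfolding T_simps(3) by (rule cls_in_T) simp

lemma g_add_assoc:
  assumes g: "good G" and t: "test A B C h1 h2 G \<Phi>" and X: "X \<in> carrier T" and Y: "Y \<in> carrier T" and Z: "Z \<in> carrier T"
  shows "evl G \<Phi> (rep ((X \<oplus>\<^bsub>T\<^esub> Y) \<oplus>\<^bsub>T\<^esub> Z)) = evl G \<Phi> (rep (X \<oplus>\<^bsub>T\<^esub> (Y \<oplus>\<^bsub>T\<^esub> Z)))"
proof -
  interpret G: abelian_group G by (rule testD(1)[OF t])
  show ?thesis
    using ev_add[OF g t] T_add_closed X Y Z ev_T_closed[OF t] by (simp add: G.a_assoc)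
qed

lemma g_add_comm:
  assumes g: "good G" and t: "test A B C h1 h2 G \<Phi>" and X: "X \<in> carrier T" and Y: "Y \<in> carrier T"
  shows "evl G \<Phi> (rep (X \<oplus>\<^bsub>T\<^esub> Y)) = evl G \<Phi> (rep (Y \<oplus>\<^bsub>T\<^esub> X))"
proof -
  interpret G: abelian_group G by (rule testD(1)[OF t])
  show ?thesis
    using ev_add[OF g t] X Y ev_T_closed[OF t] by (simp add: G.a_comm)
qed

lemma g_l_zero:
  assumes g: "good G" and t: "test A B C h1 h2 G \<Phi>" and X: "X \<in> carrier T"
  shows "evl G \<Phi> (rep (\<zero>\<^bsub>T\<^esub> \<oplus>\<^bsub>T\<^esub> X)) = evl G \<Phi> (rep X)"
proof -
  interpret G: abelian_group G by (rule testD(1)[OF t])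
  show ?thesis
    using ev_add[OF g t T_zero_closed X] ev_zero[OF g t] X ev_T_closed[OF t] by simp
qed

lemma g_l_inv:
  assumes g: "good G" and t: "test A B C h1 h2 G \<Phi>" and X: "X \<in> carrier T"
  shows "evl G \<Phi> (rep (cls (lneg (rep X)) \<oplus>\<^bsub>T\<^esub> X)) = evl G \<Phi> (rep \<zero>\<^bsub>T\<^esub>)"
proof -
  have N: "wf (lneg (rep X))" using wf_lneg rep_wf[OF X] .
  show ?thesis
    using ev_add[OF g t cls_in_T[OF N] X] ev_cls[OF g t N] evl_lneg[OF t rep_wf[OF X]] ev_zero[OF g t] by simp
qed

lemma g_distr:
  assumes g: "good G" and t: "test A B C h1 h2 G \<Phi>" and X: "X \<in> carrier T" and Y: "Y \<in> carrier T" and Z: "Z \<in> carrier T"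
  shows "evl G \<Phi> (rep ((X \<oplus>\<^bsub>T\<^esub> Y) \<otimes>\<^bsub>T\<^esub> Z)) = evl G \<Phi> (rep (X \<otimes>\<^bsub>T\<^esub> Z \<oplus>\<^bsub>T\<^esub> Y \<otimes>\<^bsub>T\<^esub> Z))"
proof -
  have t': "test A B C h1 h2 G (mulf G \<Phi> (rep Z))" using test_mulf[OF t rep_wf[OF Z]] .
  have "evl G \<Phi> (rep ((X \<oplus>\<^bsub>T\<^esub> Y) \<otimes>\<^bsub>T\<^esub> Z)) = evl G (mulf G \<Phi> (rep Z)) (rep (X \<oplus>\<^bsub>T\<^esub> Y))"
    using ev_mul[OF g t T_add_closed[OF X Y] Z] .
  also have "\<dots> = evl G (mulf G \<Phi> (rep Z)) (rep X) \<oplus>\<^bsub>G\<^esub> evl G (mulf G \<Phi> (rep Z)) (rep Y)"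
    using ev_add[OF g t' X Y] .
  also have "\<dots> = evl G \<Phi> (rep (X \<otimes>\<^bsub>T\<^esub> Z \<oplus>\<^bsub>T\<^esub> Y \<otimes>\<^bsub>T\<^esub> Z))"
    using ev_add[OF g t T_mult_closed[OF X Z] T_mult_closed[OF Y Z]] ev_mul[OF g t X Z] ev_mul[OF g t Y Z] by simp
  finally show ?thesis .
qed

lemma mulf_swap:
  assumes t: "test A B C h1 h2 G \<Phi>" and L: "wf L" and M: "wf M"
  shows "evl G (mulf G \<Phi> M) L = evl G (mulf G \<Phi> L) M"
proof -
  interpret G: abelian_group G by (rule testD(1)[OF t])
  have "evl G (mulf G \<Phi> M) L = ev G (\<lambda>p. ev G (\<lambda>q. \<Phi> (fst p \<otimes>\<^bsub>B\<^esub> fst q) (snd p \<otimes>\<^bsub>C\<^esub> snd q)) M) L"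
    by (simp add: evl_def mulf_def shift_def)
  also have "\<dots> = ev G (\<lambda>q. ev G (\<lambda>p. \<Phi> (fst p \<otimes>\<^bsub>B\<^esub> fst q) (snd p \<otimes>\<^bsub>C\<^esub> snd q)) L) M"
    by (rule G.ev_swap) (use wfD[OF L] wfD[OF M] testD(2)[OF t] in auto)
  also have "\<dots> = ev G (\<lambda>q. ev G (\<lambda>p. \<Phi> (fst q \<otimes>\<^bsub>B\<^esub> fst p) (snd q \<otimes>\<^bsub>C\<^esub> snd p)) L) M"
    apply (rule G.ev_cong) apply (rule G.ev_cong)
    using wfD[OF L] wfD[OF M] by (simp add: RB.m_comm RC.m_comm)
  also have "\<dots> = evl G (mulf G \<Phi> L) M"
    by (simp add: evl_def mulf_def shift_def)
  finally show ?thesis .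
qed

lemma g_m_comm:
  assumes g: "good G" and t: "test A B C h1 h2 G \<Phi>" and X: "X \<in> carrier T" and Y: "Y \<in> carrier T"
  shows "evl G \<Phi> (rep (X \<otimes>\<^bsub>T\<^esub> Y)) = evl G \<Phi> (rep (Y \<otimes>\<^bsub>T\<^esub> X))"
  using ev_mul[OF g t X Y] ev_mul[OF g t Y X] mulf_swap[OF t rep_wf[OF X] rep_wf[OF Y]] by simp

lemma g_l_one:
  assumes g: "good G" and t: "test A B C h1 h2 G \<Phi>" and X: "X \<in> carrier T"
  shows "evl G \<Phi> (rep (\<one>\<^bsub>T\<^esub> \<otimes>\<^bsub>T\<^esub> X)) = evl G \<Phi> (rep X)"
proof -
  interpret G: abelian_group G by (rule testD(1)[OF t])
  have t': "test A B C h1 h2 G (mulf G \<Phi> (rep X))" using test_mulf[OF t rep_wf[OF X]] .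
  have "evl G \<Phi> (rep (\<one>\<^bsub>T\<^esub> \<otimes>\<^bsub>T\<^esub> X)) = evl G (mulf G \<Phi> (rep X)) (rep \<one>\<^bsub>T\<^esub>)"
    using ev_mul[OF g t T_one_closed X] .
  also have "\<dots> = mulf G \<Phi> (rep X) \<one>\<^bsub>B\<^esub> \<one>\<^bsub>C\<^esub> \<oplus>\<^bsub>G\<^esub> \<zero>\<^bsub>G\<^esub>" using ev_one[OF g t'] .
  also have "\<dots> = mulf G \<Phi> (rep X) \<one>\<^bsub>B\<^esub> \<one>\<^bsub>C\<^esub>"
    using testD(2)[OF t'] by simp
  also have "\<dots> = evl G \<Phi> (rep X)"
    unfolding mulf_def shift_def by (rule evl_cong[OF rep_wf[OF X]]) simp
  finally show ?thesis .
qed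

lemma g_m_assoc:
  assumes g: "good G" and t: "test A B C h1 h2 G \<Phi>" and X: "X \<in> carrier T" and Y: "Y \<in> carrier T" and Z: "Z \<in> carrier T"
  shows "evl G \<Phi> (rep ((X \<otimes>\<^bsub>T\<^esub> Y) \<otimes>\<^bsub>T\<^esub> Z)) = evl G \<Phi> (rep (X \<otimes>\<^bsub>T\<^esub> (Y \<otimes>\<^bsub>T\<^esub> Z)))"
proof -
  have tZ: "test A B C h1 h2 G (mulf G \<Phi> (rep Z))" using test_mulf[OF t rep_wf[OF Z]] .
  have "evl G \<Phi> (rep ((X \<otimes>\<^bsub>T\<^esub> Y) \<otimes>\<^bsub>T\<^esub> Z)) = evl G (mulf G \<Phi> (rep Z)) (rep (X \<otimes>\<^bsub>T\<^esub> Y))"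
    using ev_mul[OF g t T_mult_closed[OF X Y] Z] .
  also have "\<dots> = evl G (mulf G (mulf G \<Phi> (rep Z)) (rep Y)) (rep X)"
    using ev_mul[OF g tZ X Y] .
  also have "\<dots> = evl G (mulf G \<Phi> (rep (Y \<otimes>\<^bsub>T\<^esub> Z))) (rep X)"
  proof (rule evl_cong[OF rep_wf[OF X]])
    fix b c assume b: "b \<in> carrier B" and c: "c \<in> carrier C"
    have ts: "test A B C h1 h2 G (shift \<Phi> b c)" using test_shift[OF t b c] .
    have "mulf G \<Phi> (rep (Y \<otimes>\<^bsub>T\<^esub> Z)) b c = evl G (shift \<Phi> b c) (rep (Y \<otimes>\<^bsub>T\<^esub> Z))"
      by (simp add: mulf_def)
    also have "\<dots> = evl G (mulf G (shift \<Phi> b c) (rep Z)) (rep Y)" using ev_mul[OF g ts Y Z] .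
    also have "\<dots> = evl G (shift (mulf G \<Phi> (rep Z)) b c) (rep Y)"
    proof (rule evl_cong[OF rep_wf[OF Y]])
      fix b' c' assume b': "b' \<in> carrier B" and c': "c' \<in> carrier C"
      show "mulf G (shift \<Phi> b c) (rep Z) b' c' = shift (mulf G \<Phi> (rep Z)) b c b' c'"
        unfolding mulf_def shift_def
        by (rule evl_cong[OF rep_wf[OF Z]]) (use b c b' c' in \<open>simp add: RB.m_assoc RC.m_assoc\<close>)
    qed
    also have "\<dots> = mulf G (mulf G \<Phi> (rep Z)) (rep Y) b c" by (simp add: mulf_def)
    finally show "mulf G (mulf G \<Phi> (rep Z)) (rep Y) b c = mulf G \<Phi> (rep (Y \<otimes>\<^bsub>T\<^esub> Z)) b c" by simp
  qed
  also have "\<dots> = evl G \<Phi> (rep (X \<otimes>\<^bsub>T\<^esub> (Y \<otimes>\<^bsub>T\<^esub> Z)))"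
    using ev_mul[OF g t X T_mult_closed[OF Y Z]] by simp
  finally show ?thesis .
qed

lemma T_cring: "cring T"
proof (rule cringI)
  show "abelian_group T"
  proof (rule abelian_groupI)
    show "\<zero>\<^bsub>T\<^esub> \<in> carrier T" by (rule T_zero_closed)
  next
    fix x y assume "x \<in> carrier T" "y \<in> carrier T"
    then show "x \<oplus>\<^bsub>T\<^esub> y \<in> carrier T" by (rule T_add_closed)
  next
    fix x y z assume x: "x \<in> carrier T" and y: "y \<in> carrier T" and z: "z \<in> carrier T"
    show "x \<oplus>\<^bsub>T\<^esub> y \<oplus>\<^bsub>T\<^esub> z = x \<oplus>\<^bsub>T\<^esub> (y \<oplus>\<^bsub>T\<^esub> z)"
      by (rule T_eq[OF T_add_closed[OF T_add_closed[OF x y] z] T_add_closed[OF x T_add_closed[OF y z]]]) (erule g_add_assoc[OF good_b _ x y z], erule g_add_assoc[OF good_c _ x y z])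
  next
    fix x y assume x: "x \<in> carrier T" and y: "y \<in> carrier T"
    show "x \<oplus>\<^bsub>T\<^esub> y = y \<oplus>\<^bsub>T\<^esub> x"
      by (rule T_eq[OF T_add_closed[OF x y] T_add_closed[OF y x]]) (erule g_add_comm[OF good_b _ x y], erule g_add_comm[OF good_c _ x y])
  next
    fix x assume x: "x \<in> carrier T"
    show "\<zero>\<^bsub>T\<^esub> \<oplus>\<^bsub>T\<^esub> x = x"
      by (rule T_eq[OF T_add_closed[OF T_zero_closed x] x]) (erule g_l_zero[OF good_b _ x], erule g_l_zero[OF good_c _ x])
  next
    fix x assume x: "x \<in> carrier T"
    have N: "cls (lneg (rep x)) \<in> carrier T" using cls_in_T wf_lneg rep_wf[OF x] by blast
    have "cls (lneg (rep x)) \<oplus>\<^bsub>T\<^esub> x = \<zero>\<^bsub>T\<^esub>"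
      by (rule T_eq[OF T_add_closed[OF N x] T_zero_closed]) (erule g_l_inv[OF good_b _ x], erule g_l_inv[OF good_c _ x])
    then show "\<exists>y\<in>carrier T. y \<oplus>\<^bsub>T\<^esub> x = \<zero>\<^bsub>T\<^esub>" using N by blast
  qed
next
  show "comm_monoid T"
  proof (rule comm_monoidI)
    show "\<one>\<^bsub>T\<^esub> \<in> carrier T" by (rule T_one_closed)
  next
    fix x y assume "x \<in> carrier T" "y \<in> carrier T"
    then show "x \<otimes>\<^bsub>T\<^esub> y \<in> carrier T" by (rule T_mult_closed)
  next
    fix x y z assume x: "x \<in> carrier T" and y: "y \<in> carrier T" and z: "z \<in> carrier T"
    show "x \<otimes>\<^bsub>T\<^esub> y \<otimes>\<^bsub>T\<^esub> z = x \<otimes>\<^bsub>T\<^esub> (y \<otimes>\<^bsub>T\<^esub> z)"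
      by (rule T_eq[OF T_mult_closed[OF T_mult_closed[OF x y] z] T_mult_closed[OF x T_mult_closed[OF y z]]]) (erule g_m_assoc[OF good_b _ x y z], erule g_m_assoc[OF good_c _ x y z])
  next
    fix x assume x: "x \<in> carrier T"
    show "\<one>\<^bsub>T\<^esub> \<otimes>\<^bsub>T\<^esub> x = x"
      by (rule T_eq[OF T_mult_closed[OF T_one_closed x] x]) (erule g_l_one[OF good_b _ x], erule g_l_one[OF good_c _ x])
  next
    fix x y assume x: "x \<in> carrier T" and y: "y \<in> carrier T"
    show "x \<otimes>\<^bsub>T\<^esub> y = y \<otimes>\<^bsub>T\<^esub> x"
      by (rule T_eq[OF T_mult_closed[OF x y] T_mult_closed[OF y x]]) (erule g_m_comm[OF good_b _ x y], erule g_m_comm[OF good_c _ x y])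
  qed
next
  fix x y z assume x: "x \<in> carrier T" and y: "y \<in> carrier T" and z: "z \<in> carrier T"
  show "(x \<oplus>\<^bsub>T\<^esub> y) \<otimes>\<^bsub>T\<^esub> z = x \<otimes>\<^bsub>T\<^esub> z \<oplus>\<^bsub>T\<^esub> y \<otimes>\<^bsub>T\<^esub> z"
    by (rule T_eq[OF T_mult_closed[OF T_add_closed[OF x y] z] T_add_closed[OF T_mult_closed[OF x z] T_mult_closed[OF y z]]]) (erule g_distr[OF good_b _ x y z], erule g_distr[OF good_c _ x y z])
qed

end

lemma test_swap:
  assumes "test A C B h2 h1 G \<Phi>"
  shows "test A B C h1 h2 G (\<lambda>b c. \<Phi> c b)"
proof -
  have t: "abelian_group G" "\<forall>x\<in>carrier C. \<forall>y\<in>carrier B. \<Phi> x y \<in> carrier G"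
     "\<forall>x1\<in>carrier C. \<forall>x2\<in>carrier C. \<forall>y\<in>carrier B. \<Phi> (x1 \<oplus>\<^bsub>C\<^esub> x2) y = \<Phi> x1 y \<oplus>\<^bsub>G\<^esub> \<Phi> x2 y"
     "\<forall>x\<in>carrier C. \<forall>y1\<in>carrier B. \<forall>y2\<in>carrier B. \<Phi> x (y1 \<oplus>\<^bsub>B\<^esub> y2) = \<Phi> x y1 \<oplus>\<^bsub>G\<^esub> \<Phi> x y2"
     "\<forall>a\<in>carrier A. \<forall>x\<in>carrier C. \<forall>y\<in>carrier B. \<Phi> (h2 a \<otimes>\<^bsub>C\<^esub> x) y = \<Phi> x (h1 a \<otimes>\<^bsub>B\<^esub> y)"
    using assms unfolding test_def by blast+
  show ?thesis unfolding test_def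
  proof (intro conjI ballI)
    show "abelian_group G" by (rule t(1))
  next
    fix x y assume "x \<in> carrier B" "y \<in> carrier C" then show "\<Phi> y x \<in> carrier G" using t(2) by blast
  next
    fix x1 x2 y assume "x1 \<in> carrier B" "x2 \<in> carrier B" "y \<in> carrier C"
    then show "\<Phi> y (x1 \<oplus>\<^bsub>B\<^esub> x2) = \<Phi> y x1 \<oplus>\<^bsub>G\<^esub> \<Phi> y x2" using t(4) by blast
  next
    fix x y1 y2 assume "x \<in> carrier B" "y1 \<in> carrier C" "y2 \<in> carrier C"
    then show "\<Phi> (y1 \<oplus>\<^bsub>C\<^esub> y2) x = \<Phi> y1 x \<oplus>\<^bsub>G\<^esub> \<Phi> y2 x" using t(3) by blast
  next
    fix a x y assume "a \<in> carrier A" "x \<in> carrier B" "y \<in> carrier C"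
    then show "\<Phi> y (h1 a \<otimes>\<^bsub>B\<^esub> x) = \<Phi> (h2 a \<otimes>\<^bsub>C\<^esub> y) x" using t(5) by metis
  qed
qed

definition encl :: "('b \<times> 'c) list \<Rightarrow> ('b + 'c) list" where
  "encl L = concat (map (\<lambda>p. [Inl (fst p), Inr (snd p)]) L)"

lemma encl_inj: "encl L = encl M \<Longrightarrow> L = M"
proof (induction L arbitrary: M)
  case Nil then show ?case by (cases M) (auto simp: encl_def)
next
  case (Cons p L)
  then show ?case by (cases M) (auto simp: encl_def prod_eq_iff)
qed

definition enc :: "('b \<times> 'c) list set set \<Rightarrow> ('b + 'c) list set" where
  "enc X = encl ` (\<Union>X)"

context amal
begin

definition jB :: "'b \<Rightarrow> ('b \<times> 'c) list set" where "jB x = cls [(x, \<one>\<^bsub>C\<^esub>)]"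
definition jC :: "'c \<Rightarrow> ('b \<times> 'c) list set" where "jC y = cls [(\<one>\<^bsub>B\<^esub>, y)]"

lemma ev_single:
  assumes g: "good G" and t: "test A B C h1 h2 G \<Phi>" and x: "x \<in> carrier B" and y: "y \<in> carrier C"
  shows "evl G \<Phi> (rep (cls [(x, y)])) = \<Phi> x y"
proof -
  interpret G: abelian_group G by (rule testD(1)[OF t])
  show ?thesis using ev_cls[OF g t, of "[(x, y)]"] x y testD(2)[OF t] by simp
qed

lemma g_jB_mult:
  assumes g: "good G" and t: "test A B C h1 h2 G \<Phi>" and x: "x \<in> carrier B" and y: "y \<in> carrier B"
  shows "evl G \<Phi> (rep (jB (x \<otimes>\<^bsub>B\<^esub> y))) = evl G \<Phi> (rep (jB x \<otimes>\<^bsub>T\<^esub> jB y))"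
proof -
  have X: "jB x \<in> carrier T" "jB y \<in> carrier T" using x y by (auto simp: jB_def intro!: cls_in_T)
  have ty: "test A B C h1 h2 G (mulf G \<Phi> (rep (jB y)))" using test_mulf[OF t rep_wf[OF X(2)]] .
  have "evl G \<Phi> (rep (jB x \<otimes>\<^bsub>T\<^esub> jB y)) = evl G (mulf G \<Phi> (rep (jB y))) (rep (jB x))"
    using ev_mul[OF g t X] .
  also have "\<dots> = mulf G \<Phi> (rep (jB y)) x \<one>\<^bsub>C\<^esub>" using ev_single[OF g ty x RC.one_closed] by (simp add: jB_def)
  also have "\<dots> = shift \<Phi> x \<one>\<^bsub>C\<^esub> y \<one>\<^bsub>C\<^esub>"
    using ev_single[OF g test_shift[OF t x RC.one_closed] y RC.one_closed] by (simp add: mulf_def jB_def)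
  also have "\<dots> = evl G \<Phi> (rep (jB (x \<otimes>\<^bsub>B\<^esub> y)))"
    unfolding jB_def shift_def using ev_single[OF g t] x y by simp
  finally show ?thesis by simp
qed

lemma g_jC_mult:
  assumes g: "good G" and t: "test A B C h1 h2 G \<Phi>" and x: "x \<in> carrier C" and y: "y \<in> carrier C"
  shows "evl G \<Phi> (rep (jC (x \<otimes>\<^bsub>C\<^esub> y))) = evl G \<Phi> (rep (jC x \<otimes>\<^bsub>T\<^esub> jC y))"
proof -
  have X: "jC x \<in> carrier T" "jC y \<in> carrier T" using x y by (auto simp: jC_def intro!: cls_in_T)
  have ty: "test A B C h1 h2 G (mulf G \<Phi> (rep (jC y)))" using test_mulf[OF t rep_wf[OF X(2)]] .
  have "evl G \<Phi> (rep (jC x \<otimes>\<^bsub>T\<^esub> jC y)) = evl G (mulf G \<Phi> (rep (jC y))) (rep (jC x))"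
    using ev_mul[OF g t X] .
  also have "\<dots> = mulf G \<Phi> (rep (jC y)) \<one>\<^bsub>B\<^esub> x" using ev_single[OF g ty RB.one_closed x] by (simp add: jC_def)
  also have "\<dots> = shift \<Phi> \<one>\<^bsub>B\<^esub> x \<one>\<^bsub>B\<^esub> y"
    using ev_single[OF g test_shift[OF t RB.one_closed x] RB.one_closed y] by (simp add: mulf_def jC_def)
  also have "\<dots> = evl G \<Phi> (rep (jC (x \<otimes>\<^bsub>C\<^esub> y)))"
    unfolding jC_def shift_def using ev_single[OF g t] x y by simp
  finally show ?thesis by simp
qed

lemma g_jB_add:
  assumes g: "good G" and t: "test A B C h1 h2 G \<Phi>" and x: "x \<in> carrier B" and y: "y \<in> carrier B"
  shows "evl G \<Phi> (rep (jB (x \<oplus>\<^bsub>B\<^esub> y))) = evl G \<Phi> (rep (jB x \<oplus>\<^bsub>T\<^esub> jB y))"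
proof -
  have X: "jB x \<in> carrier T" "jB y \<in> carrier T" using x y by (auto simp: jB_def intro!: cls_in_T)
  show ?thesis using ev_add[OF g t X] ev_single[OF g t] x y testD(3)[OF t] by (simp add: jB_def)
qed

lemma g_jC_add:
  assumes g: "good G" and t: "test A B C h1 h2 G \<Phi>" and x: "x \<in> carrier C" and y: "y \<in> carrier C"
  shows "evl G \<Phi> (rep (jC (x \<oplus>\<^bsub>C\<^esub> y))) = evl G \<Phi> (rep (jC x \<oplus>\<^bsub>T\<^esub> jC y))"
proof -
  have X: "jC x \<in> carrier T" "jC y \<in> carrier T" using x y by (auto simp: jC_def intro!: cls_in_T)
  show ?thesis using ev_add[OF g t X] ev_single[OF g t] x y testD(4)[OF t] by (simp add: jC_def)
qed

lemma g_compat: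
  assumes g: "good G" and t: "test A B C h1 h2 G \<Phi>" and a: "a \<in> carrier A"
  shows "evl G \<Phi> (rep (jB (h1 a))) = evl G \<Phi> (rep (jC (h2 a)))"
  using ev_single[OF g t] testD(5)[OF t a RB.one_closed RC.one_closed] a by (simp add: jB_def jC_def)

lemma jB_hom: "jB \<in> ring_hom B T"
proof (rule ring_hom_memI)
  fix x assume "x \<in> carrier B" then show "jB x \<in> carrier T" by (auto simp: jB_def intro!: cls_in_T)
next
  fix x y assume x: "x \<in> carrier B" and y: "y \<in> carrier B"
  have X: "jB x \<in> carrier T" "jB y \<in> carrier T" "jB (x \<otimes>\<^bsub>B\<^esub> y) \<in> carrier T" "jB (x \<oplus>\<^bsub>B\<^esub> y) \<in> carrier T"
    using x y by (auto simp: jB_def intro!: cls_in_T)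
  show "jB (x \<otimes>\<^bsub>B\<^esub> y) = jB x \<otimes>\<^bsub>T\<^esub> jB y"
    by (rule T_eq[OF X(3) T_mult_closed[OF X(1,2)]]) (erule g_jB_mult[OF good_b _ x y], erule g_jB_mult[OF good_c _ x y])
  show "jB (x \<oplus>\<^bsub>B\<^esub> y) = jB x \<oplus>\<^bsub>T\<^esub> jB y"
    by (rule T_eq[OF X(4) T_add_closed[OF X(1,2)]]) (erule g_jB_add[OF good_b _ x y], erule g_jB_add[OF good_c _ x y])
next
  show "jB \<one>\<^bsub>B\<^esub> = \<one>\<^bsub>T\<^esub>" by (simp add: jB_def T_simps)
qed

lemma jC_hom: "jC \<in> ring_hom C T"
proof (rule ring_hom_memI)
  fix x assume "x \<in> carrier C" then show "jC x \<in> carrier T" by (auto simp: jC_def intro!: cls_in_T)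
next
  fix x y assume x: "x \<in> carrier C" and y: "y \<in> carrier C"
  have X: "jC x \<in> carrier T" "jC y \<in> carrier T" "jC (x \<otimes>\<^bsub>C\<^esub> y) \<in> carrier T" "jC (x \<oplus>\<^bsub>C\<^esub> y) \<in> carrier T"
    using x y by (auto simp: jC_def intro!: cls_in_T)
  show "jC (x \<otimes>\<^bsub>C\<^esub> y) = jC x \<otimes>\<^bsub>T\<^esub> jC y"
    by (rule T_eq[OF X(3) T_mult_closed[OF X(1,2)]]) (erule g_jC_mult[OF good_b _ x y], erule g_jC_mult[OF good_c _ x y])
  show "jC (x \<oplus>\<^bsub>C\<^esub> y) = jC x \<oplus>\<^bsub>T\<^esub> jC y"
    by (rule T_eq[OF X(4) T_add_closed[OF X(1,2)]]) (erule g_jC_add[OF good_b _ x y], erule g_jC_add[OF good_c _ x y])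
next
  show "jC \<one>\<^bsub>C\<^esub> = \<one>\<^bsub>T\<^esub>" by (simp add: jC_def T_simps)
qed

lemma compat: "a \<in> carrier A \<Longrightarrow> jB (h1 a) = jC (h2 a)"
proof -
  assume a: "a \<in> carrier A"
  have X: "jB (h1 a) \<in> carrier T" "jC (h2 a) \<in> carrier T" using a by (auto simp: jB_def jC_def intro!: cls_in_T)
  show ?thesis
    by (rule T_eq[OF X]) (erule g_compat[OF good_b _ a], erule g_compat[OF good_c _ a])
qed

lemma jB_zero:
  assumes x: "x \<in> carrier B" and z: "jB x = \<zero>\<^bsub>T\<^esub>" and t: "test A B C h1 h2 (G::'b set ring) \<Phi>"
  shows "\<Phi> x \<one>\<^bsub>C\<^esub> = \<zero>\<^bsub>G\<^esub>"
proof -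
  interpret G: abelian_group G by (rule testD(1)[OF t])
  have "eqv [(x, \<one>\<^bsub>C\<^esub>)] []" using z cls_eqD[of "[]" "[(x, \<one>\<^bsub>C\<^esub>)]"] by (simp add: jB_def T_simps)
  then have "evl G \<Phi> [(x, \<one>\<^bsub>C\<^esub>)] = evl G \<Phi> []" using t unfolding eqv_def by blast
  then show ?thesis using testD(2)[OF t] x by simp
qed

lemma jC_zero:
  assumes y: "y \<in> carrier C" and z: "jC y = \<zero>\<^bsub>T\<^esub>" and t: "test A B C h1 h2 (G::'c set ring) \<Phi>"
  shows "\<Phi> \<one>\<^bsub>B\<^esub> y = \<zero>\<^bsub>G\<^esub>"
proof -
  interpret G: abelian_group G by (rule testD(1)[OF t])
  have "eqv [(\<one>\<^bsub>B\<^esub>, y)] []" using z cls_eqD[of "[]" "[(\<one>\<^bsub>B\<^esub>, y)]"] by (simp add: jC_def T_simps)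
  then have "evl G \<Phi> [(\<one>\<^bsub>B\<^esub>, y)] = evl G \<Phi> []" using t unfolding eqv_def by blast
  then show ?thesis using testD(2)[OF t] y by simp
qed

abbreviation Q where "Q \<equiv> T Quot nilrad T"

lemma enc_inj: "inj_on enc (carrier Q)"
proof (rule inj_onI)
  interpret TT: cring T by (rule T_cring)
  interpret NI: ideal "nilrad T" T by (rule TT.nilrad_ideal)
  fix X X' assume X: "X \<in> carrier Q" and X': "X' \<in> carrier Q" and e: "enc X = enc X'"
  obtain x where x: "x \<in> carrier T" "X = nilrad T +>\<^bsub>T\<^esub> x"
    using X unfolding FactRing_def using A_RCOSETS_def'[of T "nilrad T"] by auto
  obtain x' where x': "x' \<in> carrier T" "X' = nilrad T +>\<^bsub>T\<^esub> x'"
    using X' unfolding FactRing_def using A_RCOSETS_def'[of T "nilrad T"] by auto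
  have xX: "x \<in> X" using NI.a_rcos_self[OF x(1)] x(2) by simp
  define L where "L = rep x"
  have L: "wf L" "x = cls L" using rep_spec[OF x(1)] by (auto simp: L_def)
  have "L \<in> x" using L eqv_refl by (simp add: cls_def)
  then have "encl L \<in> enc X'" using e xX unfolding enc_def by blast
  then obtain Y' L' where Y': "Y' \<in> X'" "L' \<in> Y'" "encl L = encl L'" unfolding enc_def by blast
  have "L' = L" using encl_inj[OF Y'(3)] by simp
  have Y'c: "Y' \<in> carrier T" using NI.a_elemrcos_carrier[OF x'(1)] Y'(1) x'(2) by blast
  then have YY: "Y' = cls (rep Y')" using rep_spec by blast
  have "L \<in> cls (rep Y')" using Y'(2) \<open>L' = L\<close> YY by blast
  then have "eqv (rep Y') L" unfolding cls_def by blast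
  then have "cls (rep Y') = cls L" by (rule cls_eq)
  then have "Y' = x" using YY L(2) by blast
  then have "x \<in> nilrad T +>\<^bsub>T\<^esub> x'" using Y'(1) x'(2) by blast
  then have "nilrad T +>\<^bsub>T\<^esub> x' = nilrad T +>\<^bsub>T\<^esub> x" by (rule NI.a_repr_independence'[OF _ x'(1)])
  then show "X = X'" using x(2) x'(2) by blast
qed

end

lemma (in amal) emb_inj:
  assumes R: "reduced_cring R" and j: "j \<in> ring_hom R T"
    and ker: "\<And>x. x \<in> carrier R \<Longrightarrow> j x = \<zero>\<^bsub>T\<^esub> \<Longrightarrow> x = \<zero>\<^bsub>R\<^esub>"
  shows "inj_on (enc \<circ> ((+>\<^bsub>T\<^esub>) (nilrad T) \<circ> j)) (carrier R)"
proof (rule inj_onI)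
  interpret RR: cring R using R by (simp add: reduced_cring_def)
  interpret TT: cring T by (rule T_cring)
  interpret NI: ideal "nilrad T" T by (rule TT.nilrad_ideal)
  interpret HJ: ring_hom_ring R T j by (rule ring_hom_ringI2[OF RR.ring_axioms TT.ring_axioms j])
  have pi: "(+>\<^bsub>T\<^esub>) (nilrad T) \<in> ring_hom T Q" by (rule NI.rcos_ring_hom)
  fix x y assume x: "x \<in> carrier R" and y: "y \<in> carrier R"
    and e: "(enc \<circ> ((+>\<^bsub>T\<^esub>) (nilrad T) \<circ> j)) x = (enc \<circ> ((+>\<^bsub>T\<^esub>) (nilrad T) \<circ> j)) y"
  have jx: "j x \<in> carrier T" and jy: "j y \<in> carrier T" using x y by auto
  have "nilrad T +>\<^bsub>T\<^esub> j x \<in> carrier Q" "nilrad T +>\<^bsub>T\<^esub> j y \<in> carrier Q"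
    using ring_hom_closed[OF pi] jx jy by auto
  then have c: "nilrad T +>\<^bsub>T\<^esub> j x = nilrad T +>\<^bsub>T\<^esub> j y"
    using e enc_inj by (auto dest: inj_onD)
  have "j x \<in> nilrad T +>\<^bsub>T\<^esub> j y" using NI.a_rcos_self[OF jx] c by simp
  then have "j x \<ominus>\<^bsub>T\<^esub> j y \<in> nilrad T" using NI.a_rcos_module_minus[OF TT.ring_axioms jy jx] by simp
  moreover have "j (x \<ominus>\<^bsub>R\<^esub> y) = j x \<ominus>\<^bsub>T\<^esub> j y" using x y by (simp add: RR.minus_eq TT.minus_eq)
  ultimately have "j (x \<ominus>\<^bsub>R\<^esub> y) \<in> nilrad T" by simp
  then obtain n :: nat where n: "j (x \<ominus>\<^bsub>R\<^esub> y) [^]\<^bsub>T\<^esub> n = \<zero>\<^bsub>T\<^esub>" unfolding nilrad_def by blast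
  have xy: "x \<ominus>\<^bsub>R\<^esub> y \<in> carrier R" using x y by simp
  have "j ((x \<ominus>\<^bsub>R\<^esub> y) [^]\<^bsub>R\<^esub> n) = \<zero>\<^bsub>T\<^esub>" using HJ.hom_nat_pow[OF xy, of n] n by simp
  then have "(x \<ominus>\<^bsub>R\<^esub> y) [^]\<^bsub>R\<^esub> n = \<zero>\<^bsub>R\<^esub>" using ker xy by simp
  then have "x \<ominus>\<^bsub>R\<^esub> y = \<zero>\<^bsub>R\<^esub>" using R xy unfolding reduced_cring_def by blast
  moreover have "x = (x \<ominus>\<^bsub>R\<^esub> y) \<oplus>\<^bsub>R\<^esub> y" using x y by algebra
  ultimately show "x = y" using y by simp
qed

theorem mainTheorem11:
  fixes A :: "'a ring" and B :: "'b ring" and C :: "'c ring"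
    and h1 :: "'a \<Rightarrow> 'b" and h2 :: "'a \<Rightarrow> 'c"
  assumes "vn_regular_cring A"
    and "reduced_cring B" and "reduced_cring C"
    and "ring_embedding A B h1" and "ring_embedding A C h2"
  shows "\<exists>(D :: (('b + 'c) list set) ring) (g1 :: 'b \<Rightarrow> ('b + 'c) list set)
            (g2 :: 'c \<Rightarrow> ('b + 'c) list set).
           reduced_cring D \<and> ring_embedding B D g1 \<and> ring_embedding C D g2 \<and>
           (\<forall>a \<in> carrier A. g1 (h1 a) = g2 (h2 a))"
proof -
  have cA: "cring A" and reg: "\<forall>a\<in>carrier A. \<exists>x\<in>carrier A. a = (a \<otimes>\<^bsub>A\<^esub> a) \<otimes>\<^bsub>A\<^esub> x"
    using assms(1) unfolding vn_regular_cring_def by auto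
  have cB: "cring B" using assms(2) unfolding reduced_cring_def by auto
  have cC: "cring C" using assms(3) unfolding reduced_cring_def by auto
  have h1: "h1 \<in> ring_hom A B" and inj1: "inj_on h1 (carrier A)"
    using assms(4) unfolding ring_embedding_def by auto
  have h2: "h2 \<in> ring_hom A C" and inj2: "inj_on h2 (carrier A)"
    using assms(5) unfolding ring_embedding_def by auto
  interpret M: amal A B C h1 h2 by (rule amal.intro[OF cA cB cC h1 h2])
  interpret TT: cring M.T by (rule M.T_cring)
  interpret NI: ideal "nilrad M.T" M.T by (rule TT.nilrad_ideal)
  have kerB: "x = \<zero>\<^bsub>B\<^esub>" if x: "x \<in> carrier B" and z: "M.jB x = \<zero>\<^bsub>M.T\<^esub>" for x
  proof (rule ccontr)
    assume nz: "x \<noteq> \<zero>\<^bsub>B\<^esub>"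
    interpret K: key_setup A B C h1 h2 x
      by (rule key_setup.intro[OF cA cB cC h1 h2 inj2 reg x nz])
    obtain G :: "'b set ring" and \<Phi> where t: "test A B C h1 h2 G \<Phi>" and ne: "\<Phi> x \<one>\<^bsub>C\<^esub> \<noteq> \<zero>\<^bsub>G\<^esub>"
      using K.KEY by blast
    show False using M.jB_zero[OF x z t] ne by simp
  qed
  have kerC: "y = \<zero>\<^bsub>C\<^esub>" if y: "y \<in> carrier C" and z: "M.jC y = \<zero>\<^bsub>M.T\<^esub>" for y
  proof (rule ccontr)
    assume nz: "y \<noteq> \<zero>\<^bsub>C\<^esub>"
    interpret K: key_setup A C B h2 h1 y
      by (rule key_setup.intro[OF cA cC cB h2 h1 inj1 reg y nz])
    obtain G :: "'c set ring" and \<Phi> where t: "test A C B h2 h1 G \<Phi>" and ne: "\<Phi> y \<one>\<^bsub>B\<^esub> \<noteq> \<zero>\<^bsub>G\<^esub>"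
      using K.KEY by blast
    show False using M.jC_zero[OF y z test_swap[OF t]] ne by simp
  qed
  have Qc: "cring M.Q" by (rule NI.quotient_is_cring[OF TT.is_cring])
  have Qred: "reduced_cring M.Q" by (rule TT.nilrad_quot_reduced)
  define D where "D = image_ring enc M.Q"
  have iso: "enc \<in> ring_iso M.Q D" unfolding D_def by (rule inj_imp_image_ring_iso[OF M.enc_inj])
  have hom_enc: "enc \<in> ring_hom M.Q D" using iso unfolding ring_iso_def by blast
  have Dz: "\<zero>\<^bsub>D\<^esub> = enc \<zero>\<^bsub>M.Q\<^esub>" unfolding D_def by (rule image_ring_zero)
  have "cring (D \<lparr>zero := enc \<zero>\<^bsub>M.Q\<^esub>\<rparr>)" by (rule cring.ring_iso_imp_img_cring[OF Qc iso])
  moreover have "D \<lparr>zero := enc \<zero>\<^bsub>M.Q\<^esub>\<rparr> = D" by (simp add: Dz[symmetric])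
  ultimately have Dc: "cring D" by simp
  have Dred: "reduced_cring D"
    unfolding reduced_cring_def
  proof (intro conjI Dc ballI allI impI)
    fix d n assume d: "d \<in> carrier D" and dn: "d [^]\<^bsub>D\<^esub> (n::nat) = \<zero>\<^bsub>D\<^esub>"
    interpret QQ: cring M.Q by (rule Qc)
    interpret DD: cring D by (rule Dc)
    interpret HE: ring_hom_ring M.Q D enc by (rule ring_hom_ringI2[OF QQ.ring_axioms DD.ring_axioms hom_enc])
    obtain q where q: "q \<in> carrier M.Q" "d = enc q" using d unfolding D_def image_ring_carrier by blast
    have "enc (q [^]\<^bsub>M.Q\<^esub> n) = enc q [^]\<^bsub>D\<^esub> n" by (rule HE.hom_nat_pow[OF q(1)])
    also have "\<dots> = d [^]\<^bsub>D\<^esub> n" by (simp only: q(2))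
    also have "\<dots> = enc \<zero>\<^bsub>M.Q\<^esub>" by (simp only: dn Dz)
    finally have e: "enc (q [^]\<^bsub>M.Q\<^esub> n) = enc \<zero>\<^bsub>M.Q\<^esub>" .
    have "q [^]\<^bsub>M.Q\<^esub> n \<in> carrier M.Q" by (rule QQ.nat_pow_closed[OF q(1)])
    then have "q [^]\<^bsub>M.Q\<^esub> n = \<zero>\<^bsub>M.Q\<^esub>" using inj_onD[OF M.enc_inj e] QQ.zero_closed by blast
    then have "q = \<zero>\<^bsub>M.Q\<^esub>" using Qred q(1) unfolding reduced_cring_def by blast
    then show "d = \<zero>\<^bsub>D\<^esub>" by (simp only: q(2) Dz)
  qed
  define g1 where "g1 = enc \<circ> ((+>\<^bsub>M.T\<^esub>) (nilrad M.T) \<circ> M.jB)"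
  define g2 where "g2 = enc \<circ> ((+>\<^bsub>M.T\<^esub>) (nilrad M.T) \<circ> M.jC)"
  have g1h: "g1 \<in> ring_hom B D" unfolding g1_def
    by (rule ring_hom_trans[OF ring_hom_trans[OF M.jB_hom NI.rcos_ring_hom] hom_enc])
  have g2h: "g2 \<in> ring_hom C D" unfolding g2_def
    by (rule ring_hom_trans[OF ring_hom_trans[OF M.jC_hom NI.rcos_ring_hom] hom_enc])
  have g1i: "inj_on g1 (carrier B)" unfolding g1_def
    by (rule M.emb_inj[OF assms(2) M.jB_hom kerB])
  have g2i: "inj_on g2 (carrier C)" unfolding g2_def
    by (rule M.emb_inj[OF assms(3) M.jC_hom kerC])
  have comp: "\<forall>a\<in>carrier A. g1 (h1 a) = g2 (h2 a)"
    unfolding g1_def g2_def using M.compat by simp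
  show ?thesis
    using Dred g1h g2h g1i g2i comp unfolding ring_embedding_def by blast
qed

end
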